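(* Let $U,V$ be nonlocal vertex algebras, $R(x)$ a twisting operator for $(U,V)$, and $U\otimes_RV$ the twisted tensor product. Then the $\mathcal D$-operator of $U\otimes_RV$ is $\mathcal D\otimes1+1\otimes\mathcal D$ (where the two $\mathcal D$'s are those of $U$ and $V$). Moreover, for $u\in U$, $v\in V$ (identified with $u\otimes\mathbf 1$ and $\mathbf 1\otimes v$), $$Y_R(u,x)v\in(U\otimes V)[[x]],$$ and, writing $R(x)(v\otimes u)=\sum_{i=1}^r u_i\otimes v_i\otimes f_i(x)$ with $u_i\in U$, $v_i\in V$, $f_i\in\mathbb C((x))$, $$Y_R(v,x)u=e^{x(\mathcal D\otimes1+1\otimes\mathcal D)}\sum_{i=1}^r f_i(-x)\,Y_R(u_i,-x)v_i .$$
   Context: All vector spaces are over $\mathbb{C}$. A nonlocal vertex algebra is a vector space $V$ with a linear map $Y(\cdot,x):V\to \mathrm{Hom}(V,V((x)))$, $v\mapsto Y(v,x)=\sum_{n\in\mathbb Z}v_nx^{-n-1}$, and a vector $\mathbf 1\in V$ such that for all $v$: $Y(\mathbf 1,x)v=v$, $Y(v,x)\mathbf 1\in V[[x]]$, $\lim_{x\to0}Y(v,x)\mathbf 1=v$; and for all $u,v,w$ there is $k\ge0$ with $(x_0+x_2)^kY(u,x_0+x_2)Y(v,x_2)w=(x_0+x_2)^kY(Y(u,x_0)v,x_2)w$. Write $Y(x)(u\otimes v)=Y(u,x)v$. The $\mathcal D$-operator is $\mathcal Dv=v_{-2}\mathbf 1$. Conventions: $f(x_1\pm x_2)$ for $f\in\mathbb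 C((x))$ is expanded in nonnegative powers of the second variable; $T^{ij}$ denotes a map $T$ acting on the $i$-th and $j$-th tensor factors; maps are extended linearly over scalar series. Twisting operator for $(U,V)$: a linear map $R(x):V\otimes U\to U\otimes V\otimes\mathbb C((x))$ such that $R(x)(v\otimes\mathbf 1)=\mathbf 1\otimes v$, $R(x)(\mathbf 1\otimes u)=u\otimes\mathbf 1$, $R(x_1)(1\otimes Y(x_2))=(Y(x_2)\otimes1)R^{23}(x_1)R^{12}(x_1+x_2)$ on $V\otimes U\otimes U$, and $R(x_1)(Y(x_2)\otimes 1)=(1\otimes Y(x_2))R^{12}(x_1-x_2)R^{23}(x_1)$ on $V\otimes V\otimes U$. Twisted tensor product $U\otimes_RV$: the nonlocal vertex algebra on $U\otimes V$ with vacuum $\mathbf 1\otimes\mathbf 1$ and $Y_R(u\otimes v,x)(u'\otimes v')=\sum_i f_i(-x)Y(u,x)u'_i\otimes Y(v_i,x)v'$ where $R(x)(v\otimes u')=\sum_i u'_i\otimes v_i\otimes f_i(x)$ (i.e. $Y_R(x)=(Y(x)\otimes Y(x))R^{23}(-x)$). Elements $u\in U$, $v\in V$ are identified with $u\otimes\mathbf 1$, $\mathbf 1\otimes v$, which embeds $U$ and $V$ as subalgebras. *)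

theory Defs
  imports Complex_Main "HOL-Library.Function_Algebras"
begin

section \<open>Complex vector spaces\<close>

class cvec = ab_group_add +
  fixes scaleC :: "complex \<Rightarrow> 'a \<Rightarrow> 'a" (infixr "*\<^sub>C" 75)
  assumes scaleC_add_right: "c *\<^sub>C (x + y) = c *\<^sub>C x + c *\<^sub>C y"
    and scaleC_add_left: "(c + d) *\<^sub>C x = c *\<^sub>C x + d *\<^sub>C x"
    and scaleC_scaleC: "c *\<^sub>C (d *\<^sub>C x) = (c * d) *\<^sub>C x"
    and scaleC_one: "1 *\<^sub>C x = x"

instantiation complex :: cvec
begin
definition scaleC_complex :: "complex \<Rightarrow> complex \<Rightarrow> complex" where
  "scaleC_complex c z = c * z"
instance by standard (auto simp: scaleC_complex_def algebra_simps)
end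

instantiation "fun" :: (type, cvec) cvec
begin
definition scaleC_fun :: "complex \<Rightarrow> ('a \<Rightarrow> 'b) \<Rightarrow> 'a \<Rightarrow> 'b" where
  "scaleC_fun c f = (\<lambda>x. c *\<^sub>C f x)"
instance by standard (auto simp: scaleC_fun_def scaleC_add_right scaleC_add_left scaleC_scaleC scaleC_one)
end

definition clinear :: "('a::cvec \<Rightarrow> 'b::cvec) \<Rightarrow> bool" where
  "clinear f \<longleftrightarrow> (\<forall>x y. f (x + y) = f x + f y) \<and> (\<forall>c x. f (c *\<^sub>C x) = c *\<^sub>C f x)"

definition cbilinear :: "('a::cvec \<Rightarrow> 'b::cvec \<Rightarrow> 'c::cvec) \<Rightarrow> bool" where
  "cbilinear f \<longleftrightarrow> (\<forall>y. clinear (\<lambda>x. f x y)) \<and> (\<forall>x. clinear (f x))"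

inductive_set cspan :: "'a::cvec set \<Rightarrow> 'a set" for S where
  cspan_zero: "0 \<in> cspan S"
| cspan_base: "x \<in> S \<Longrightarrow> x \<in> cspan S"
| cspan_add: "x \<in> cspan S \<Longrightarrow> y \<in> cspan S \<Longrightarrow> x + y \<in> cspan S"
| cspan_scale: "x \<in> cspan S \<Longrightarrow> c *\<^sub>C x \<in> cspan S"
| cspan_uminus: "x \<in> cspan S \<Longrightarrow> - x \<in> cspan S"
| cspan_diff: "x \<in> cspan S \<Longrightarrow> y \<in> cspan S \<Longrightarrow> x - y \<in> cspan S"

section \<open>Algebraic tensor product over the complex numbers\<close>

text \<open>The algebraic tensor product A (x) B is realised as the span of the evaluation
  functionals  beta |-> beta a b  on the space of bilinear forms A x B -> C
  (the canonical image of A (x) B in its double dual, which is injective).\<close>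

definition tphi :: "'a::cvec \<Rightarrow> 'b::cvec \<Rightarrow> (('a \<Rightarrow> 'b \<Rightarrow> complex) \<Rightarrow> complex)" where
  "tphi a b = (\<lambda>\<beta>. if cbilinear \<beta> then \<beta> a b else 0)"

typedef (overloaded) ('a::cvec, 'b::cvec) tensor = "cspan (range (\<lambda>(a::'a, b::'b). tphi a b))"
  morphisms rep_tensor abs_tensor
  by (rule exI[of _ 0]) (rule cspan_zero)

setup_lifting type_definition_tensor

instantiation tensor :: (cvec, cvec) cvec
begin
lift_definition zero_tensor :: "('a, 'b) tensor" is 0 by (rule cspan_zero)
lift_definition plus_tensor :: "('a, 'b) tensor \<Rightarrow> ('a, 'b) tensor \<Rightarrow> ('a, 'b) tensor" is "(+)"
  by (rule cspan_add)
lift_definition minus_tensor :: "('a, 'b) tensor \<Rightarrow> ('a, 'b) tensor \<Rightarrow> ('a, 'b) tensor" is "(-)"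
  by (rule cspan_diff)
lift_definition uminus_tensor :: "('a, 'b) tensor \<Rightarrow> ('a, 'b) tensor" is uminus
  by (rule cspan_uminus)
lift_definition scaleC_tensor :: "complex \<Rightarrow> ('a, 'b) tensor \<Rightarrow> ('a, 'b) tensor" is scaleC
  by (rule cspan_scale)
instance
  by standard (transfer; simp add: algebra_simps scaleC_add_right scaleC_add_left scaleC_scaleC scaleC_one)+
end

lift_definition tensor :: "'a::cvec \<Rightarrow> 'b::cvec \<Rightarrow> ('a, 'b) tensor" (infixr "\<otimes>" 70) is tphi
  by (auto intro: cspan_base)

text \<open>Linear extension of a bilinear map along the tensor product
  (the unique linear map g with g (a \<otimes> b) = F a b).\<close>
definition tlift :: "('a::cvec \<Rightarrow> 'b::cvec \<Rightarrow> 'c::cvec) \<Rightarrow> ('a, 'b) tensor \<Rightarrow> 'c" where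
  "tlift F = (SOME g. clinear g \<and> (\<forall>a b. g (a \<otimes> b) = F a b))"

definition tmap :: "('a::cvec \<Rightarrow> 'c::cvec) \<Rightarrow> ('b::cvec \<Rightarrow> 'd::cvec) \<Rightarrow> ('a, 'b) tensor \<Rightarrow> ('c, 'd) tensor" where
  "tmap f g = tlift (\<lambda>a b. f a \<otimes> g b)"

section \<open>Formal series\<close>

text \<open>A formal series in one variable is represented by its coefficient function
  int => coefficient (coefficient of x^m at m); in two variables x1, x2 by
  int => int => coefficient (coefficient of x1^i x2^j at i j).\<close>

text \<open>Scalar Laurent series C((x)).\<close>
typedef laurent = "{f :: int \<Rightarrow> complex. \<exists>N. \<forall>n<N. f n = 0}"
  morphisms lcoeff Abs_laurent
  by (rule exI[of _ 0]) auto

setup_lifting type_definition_laurent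

instantiation laurent :: cvec
begin
lift_definition zero_laurent :: laurent is 0 by auto
lift_definition plus_laurent :: "laurent \<Rightarrow> laurent \<Rightarrow> laurent" is "(+)"
proof -
  fix f g :: "int \<Rightarrow> complex"
  assume "\<exists>N. \<forall>n<N. f n = 0" "\<exists>N. \<forall>n<N. g n = 0"
  then obtain N M where "\<forall>n<N. f n = 0" "\<forall>n<M. g n = 0" by blast
  then show "\<exists>N. \<forall>n<N. (f + g) n = 0" by (intro exI[of _ "min N M"]) auto
qed
lift_definition minus_laurent :: "laurent \<Rightarrow> laurent \<Rightarrow> laurent" is "(-)"
proof -
  fix f g :: "int \<Rightarrow> complex"
  assume "\<exists>N. \<forall>n<N. f n = 0" "\<exists>N. \<forall>n<N. g n = 0"
  then obtain N M where "\<forall>n<N. f n = 0" "\<forall>n<M. g n = 0" by blast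
  then show "\<exists>N. \<forall>n<N. (f - g) n = 0" by (intro exI[of _ "min N M"]) auto
qed
lift_definition uminus_laurent :: "laurent \<Rightarrow> laurent" is uminus by auto
lift_definition scaleC_laurent :: "complex \<Rightarrow> laurent \<Rightarrow> laurent" is scaleC
  by (auto simp: scaleC_fun_def scaleC_complex_def)
instance
  by standard (transfer; simp add: algebra_simps scaleC_add_right scaleC_add_left scaleC_scaleC scaleC_one)+
end

lift_definition lone :: laurent is "\<lambda>n. if n = 0 then 1 else 0"
  by (rule exI[of _ 0]) auto

text \<open>Formal products of series.  The coefficient of a product is the sum over
  the (in all uses below, finite) set of index pairs where both factors are nonzero.\<close>
definition conv :: "('a::zero \<Rightarrow> 'b::zero \<Rightarrow> 'c::comm_monoid_add) \<Rightarrow> (int \<Rightarrow> 'a) \<Rightarrow> (int \<Rightarrow> 'b) \<Rightarrow> int \<Rightarrow> 'c" where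
  "conv B f g m = (\<Sum>p\<in>{p. f p \<noteq> 0 \<and> g (m - p) \<noteq> 0}. B (f p) (g (m - p)))"

definition conv2 :: "('a::zero \<Rightarrow> 'b::zero \<Rightarrow> 'c::comm_monoid_add) \<Rightarrow> (int \<Rightarrow> int \<Rightarrow> 'a) \<Rightarrow> (int \<Rightarrow> int \<Rightarrow> 'b) \<Rightarrow> int \<Rightarrow> int \<Rightarrow> 'c" where
  "conv2 B F G i j = (\<Sum>(p, q)\<in>{(p, q). F p q \<noteq> 0 \<and> G (i - p) (j - q) \<noteq> 0}. B (F p q) (G (i - p) (j - q)))"

text \<open>s(-x) from s(x).\<close>
definition negser :: "(int \<Rightarrow> 'a::cvec) \<Rightarrow> int \<Rightarrow> 'a" where
  "negser s m = (if even m then s m else - s m)"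

text \<open>f(x1 + x2) and f(x1 - x2), expanded in nonnegative powers of x2.\<close>
definition ser_plus :: "(int \<Rightarrow> complex) \<Rightarrow> int \<Rightarrow> int \<Rightarrow> complex" where
  "ser_plus f i j = (if 0 \<le> j then (of_int (i + j) gchoose nat j) * f (i + j) else 0)"

definition ser_minus :: "(int \<Rightarrow> complex) \<Rightarrow> int \<Rightarrow> int \<Rightarrow> complex" where
  "ser_minus f i j = (if 0 \<le> j then (-1) ^ nat j * (of_int (i + j) gchoose nat j) * f (i + j) else 0)"

text \<open>A series in x1 alone, and a series in x2 alone, viewed as two-variable series.\<close>
definition in_x1 :: "(int \<Rightarrow> 'a::zero) \<Rightarrow> int \<Rightarrow> int \<Rightarrow> 'a" where
  "in_x1 s i j = (if j = 0 then s i else 0)"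
definition in_x2 :: "(int \<Rightarrow> 'a::zero) \<Rightarrow> int \<Rightarrow> int \<Rightarrow> 'a" where
  "in_x2 s i j = (if i = 0 then s j else 0)"

text \<open>Given a two-variable series F(x1, x2), the series F(x0 + x2, x2) in (x0, x2),
  x1 = x0 + x2 expanded in nonnegative powers of x2.\<close>
definition subst_plus :: "(int \<Rightarrow> int \<Rightarrow> 'a::cvec) \<Rightarrow> int \<Rightarrow> int \<Rightarrow> 'a" where
  "subst_plus F a b = (\<Sum>l\<in>{l::nat. F (a + int l) (b - int l) \<noteq> 0}.
      ((of_int (a + int l) :: complex) gchoose l) *\<^sub>C F (a + int l) (b - int l))"

text \<open>Multiplication of a two-variable series by the polynomial (x0 + x2)^k.\<close>
definition mult_binom :: "nat \<Rightarrow> (int \<Rightarrow> int \<Rightarrow> 'a::cvec) \<Rightarrow> int \<Rightarrow> int \<Rightarrow> 'a" where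
  "mult_binom k G a b = (\<Sum>t\<le>k. (of_nat (k choose t) :: complex) *\<^sub>C G (a - int (k - t)) (b - int t))"

text \<open>e^{xD} applied to a series s(x).\<close>
definition exp_act :: "('a::cvec \<Rightarrow> 'a) \<Rightarrow> (int \<Rightarrow> 'a) \<Rightarrow> int \<Rightarrow> 'a" where
  "exp_act D s m = (\<Sum>k\<in>{k::nat. s (m - int k) \<noteq> 0}. (1 / of_nat (fact k) :: complex) *\<^sub>C (D ^^ k) (s (m - int k)))"

section \<open>Nonlocal vertex algebras\<close>

text \<open>Y u v n is the mode u_n v, so Y(u,x)v = sum_n (Y u v n) x^(-n-1).
  The coefficient of x^m in Y(u,x)v is Y u v (-m-1).\<close>

definition yser :: "('a \<Rightarrow> 'a \<Rightarrow> int \<Rightarrow> 'a) \<Rightarrow> 'a \<Rightarrow> 'a \<Rightarrow> int \<Rightarrow> 'a" where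
  "yser Y u v m = Y u v (- m - 1)"

text \<open>(x0+x2)^k Y(u,x0+x2) Y(v,x2) w  and  (x0+x2)^k Y(Y(u,x0)v,x2) w.\<close>
definition assoc_lhs :: "('a::cvec \<Rightarrow> 'a \<Rightarrow> int \<Rightarrow> 'a) \<Rightarrow> nat \<Rightarrow> 'a \<Rightarrow> 'a \<Rightarrow> 'a \<Rightarrow> int \<Rightarrow> int \<Rightarrow> 'a" where
  "assoc_lhs Y k u v w = mult_binom k (subst_plus (\<lambda>i j. yser Y u (yser Y v w j) i))"

definition assoc_rhs :: "('a::cvec \<Rightarrow> 'a \<Rightarrow> int \<Rightarrow> 'a) \<Rightarrow> nat \<Rightarrow> 'a \<Rightarrow> 'a \<Rightarrow> 'a \<Rightarrow> int \<Rightarrow> int \<Rightarrow> 'a" where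
  "assoc_rhs Y k u v w = mult_binom k (\<lambda>a b. yser Y (yser Y u v a) w b)"

definition nlva :: "('a::cvec \<Rightarrow> 'a \<Rightarrow> int \<Rightarrow> 'a) \<Rightarrow> 'a \<Rightarrow> bool" where
  "nlva Y one \<longleftrightarrow>
     cbilinear Y \<and>
     (\<forall>u v. \<exists>N. \<forall>n>N. Y u v n = 0) \<and>
     (\<forall>v n. Y one v n = (if n = -1 then v else 0)) \<and>
     (\<forall>v n. 0 \<le> n \<longrightarrow> Y v one n = 0) \<and>
     (\<forall>v. Y v one (-1) = v) \<and>
     (\<forall>u v w. \<exists>k. \<forall>a b. assoc_lhs Y k u v w a b = assoc_rhs Y k u v w a b)"

definition Dop :: "('a \<Rightarrow> 'a \<Rightarrow> int \<Rightarrow> 'a) \<Rightarrow> 'a \<Rightarrow> 'a \<Rightarrow> 'a" where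
  "Dop Y one v = Y v one (-2)"

section \<open>Twisting operators and twisted tensor products\<close>

type_synonym ('u, 'v) twop = "('v, 'u) tensor \<Rightarrow> (('u, 'v) tensor, laurent) tensor"

text \<open>Evaluation of an element of (U \<otimes> V) \<otimes> C((x)) as a series with coefficients in U \<otimes> V.\<close>
definition evser :: "(('u::cvec, 'v::cvec) tensor, laurent) tensor \<Rightarrow> int \<Rightarrow> ('u, 'v) tensor" where
  "evser = tlift (\<lambda>t f. (\<lambda>m. lcoeff f m *\<^sub>C t))"

text \<open>R(x1)(1 \<otimes> Y(x2)) applied to v \<otimes> u \<otimes> u'.\<close>
definition tw1_lhs :: "('u::cvec \<Rightarrow> 'u \<Rightarrow> int \<Rightarrow> 'u) \<Rightarrow> ('u, 'v::cvec) twop \<Rightarrow> 'v \<Rightarrow> 'u \<Rightarrow> 'u \<Rightarrow> int \<Rightarrow> int \<Rightarrow> ('u, 'v) tensor" where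
  "tw1_lhs Yu R v u u' i j = evser (R (v \<otimes> yser Yu u u' j)) i"

text \<open>(Y(x2) \<otimes> 1) R^23(x1) R^12(x1+x2) applied to v \<otimes> u \<otimes> u'.\<close>
definition tw1_rhs :: "('u::cvec \<Rightarrow> 'u \<Rightarrow> int \<Rightarrow> 'u) \<Rightarrow> ('u, 'v::cvec) twop \<Rightarrow> 'v \<Rightarrow> 'u \<Rightarrow> 'u \<Rightarrow> int \<Rightarrow> int \<Rightarrow> ('u, 'v) tensor" where
  "tw1_rhs Yu R v u u' =
     tlift (\<lambda>t f. tlift (\<lambda>a b.
        tlift (\<lambda>t' g. tlift (\<lambda>c d.
           conv2 (*\<^sub>C) (conv2 (*) (ser_plus (lcoeff f)) (in_x1 (lcoeff g)))
                 (in_x2 (\<lambda>j. yser Yu a c j \<otimes> d))) t') (R (b \<otimes> u'))) t) (R (v \<otimes> u))"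

text \<open>R(x1)(Y(x2) \<otimes> 1) applied to v \<otimes> v' \<otimes> u.\<close>
definition tw2_lhs :: "('v::cvec \<Rightarrow> 'v \<Rightarrow> int \<Rightarrow> 'v) \<Rightarrow> ('u::cvec, 'v) twop \<Rightarrow> 'v \<Rightarrow> 'v \<Rightarrow> 'u \<Rightarrow> int \<Rightarrow> int \<Rightarrow> ('u, 'v) tensor" where
  "tw2_lhs Yv R v v' u i j = evser (R (yser Yv v v' j \<otimes> u)) i"

text \<open>(1 \<otimes> Y(x2)) R^12(x1-x2) R^23(x1) applied to v \<otimes> v' \<otimes> u.\<close>
definition tw2_rhs :: "('v::cvec \<Rightarrow> 'v \<Rightarrow> int \<Rightarrow> 'v) \<Rightarrow> ('u::cvec, 'v) twop \<Rightarrow> 'v \<Rightarrow> 'v \<Rightarrow> 'u \<Rightarrow> int \<Rightarrow> int \<Rightarrow> ('u, 'v) tensor" where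
  "tw2_rhs Yv R v v' u =
     tlift (\<lambda>t g. tlift (\<lambda>a b.
        tlift (\<lambda>t' f. tlift (\<lambda>c d.
           conv2 (*\<^sub>C) (conv2 (*) (ser_minus (lcoeff f)) (in_x1 (lcoeff g)))
                 (in_x2 (\<lambda>j. c \<otimes> yser Yv d b j))) t') (R (v \<otimes> a))) t) (R (v' \<otimes> u))"

definition twisting_operator ::
  "('u::cvec \<Rightarrow> 'u \<Rightarrow> int \<Rightarrow> 'u) \<Rightarrow> 'u \<Rightarrow> ('v::cvec \<Rightarrow> 'v \<Rightarrow> int \<Rightarrow> 'v) \<Rightarrow> 'v \<Rightarrow> ('u, 'v) twop \<Rightarrow> bool" where
  "twisting_operator Yu oneu Yv onev R \<longleftrightarrow>
     clinear R \<and>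
     (\<forall>v. R (v \<otimes> oneu) = (oneu \<otimes> v) \<otimes> lone) \<and>
     (\<forall>u. R (onev \<otimes> u) = (u \<otimes> onev) \<otimes> lone) \<and>
     (\<forall>v u u'. tw1_lhs Yu R v u u' = tw1_rhs Yu R v u u') \<and>
     (\<forall>v v' u. tw2_lhs Yv R v v' u = tw2_rhs Yv R v v' u)"

text \<open>Y_R(w, x) w' as a series (coefficient of x^m):
  Y_R(u \<otimes> v, x)(u' \<otimes> v') = sum_i f_i(-x) Y(u,x)u'_i \<otimes> Y(v_i,x)v',
  where R(x)(v \<otimes> u') = sum_i u'_i \<otimes> v_i \<otimes> f_i(x).\<close>
definition YR_simple :: "('u::cvec \<Rightarrow> 'u \<Rightarrow> int \<Rightarrow> 'u) \<Rightarrow> ('v::cvec \<Rightarrow> 'v \<Rightarrow> int \<Rightarrow> 'v) \<Rightarrow> ('u, 'v) twop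
    \<Rightarrow> 'u \<Rightarrow> 'v \<Rightarrow> 'u \<Rightarrow> 'v \<Rightarrow> int \<Rightarrow> ('u, 'v) tensor" where
  "YR_simple Yu Yv R u v u' v' =
     tlift (\<lambda>t f. tlift (\<lambda>a b.
        conv (*\<^sub>C) (negser (lcoeff f)) (conv (\<otimes>) (yser Yu u a) (yser Yv b v'))) t) (R (v \<otimes> u'))"

definition YRser :: "('u::cvec \<Rightarrow> 'u \<Rightarrow> int \<Rightarrow> 'u) \<Rightarrow> ('v::cvec \<Rightarrow> 'v \<Rightarrow> int \<Rightarrow> 'v) \<Rightarrow> ('u, 'v) twop
    \<Rightarrow> ('u, 'v) tensor \<Rightarrow> ('u, 'v) tensor \<Rightarrow> int \<Rightarrow> ('u, 'v) tensor" where
  "YRser Yu Yv R = tlift (\<lambda>u v. tlift (\<lambda>u' v'. YR_simple Yu Yv R u v u' v'))"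

text \<open>The vertex operator of U \<otimes>_R V in mode form: YR w w' n = w_n w'.\<close>
definition YR :: "('u::cvec \<Rightarrow> 'u \<Rightarrow> int \<Rightarrow> 'u) \<Rightarrow> ('v::cvec \<Rightarrow> 'v \<Rightarrow> int \<Rightarrow> 'v) \<Rightarrow> ('u, 'v) twop
    \<Rightarrow> ('u, 'v) tensor \<Rightarrow> ('u, 'v) tensor \<Rightarrow> int \<Rightarrow> ('u, 'v) tensor" where
  "YR Yu Yv R w w' n = YRser Yu Yv R w w' (- n - 1)"

end

theory Submission
  imports Defs
begin


section \<open>cvec basics\<close>

lemma scaleC_zero_left[simp]: "(0::complex) *\<^sub>C (x::'a::cvec) = 0"
proof -
  note scaleC_add_left[of 0 0 x, unfolded add_0_left]
  thus ?thesis by (metis add_cancel_right_right)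
qed

lemma scaleC_zero_right[simp]: "c *\<^sub>C (0::'a::cvec) = 0"
proof -
  note scaleC_add_right[of c "0::'a" 0, unfolded add_0_left]
  thus ?thesis by (metis add_cancel_right_right)
qed

lemma scaleC_minus_left: "(-c) *\<^sub>C (x::'a::cvec) = - (c *\<^sub>C x)"
proof -
  have "c *\<^sub>C x + (-c) *\<^sub>C x = 0" by (metis scaleC_add_left add.right_inverse scaleC_zero_left)
  thus ?thesis by (metis add.commute eq_neg_iff_add_eq_0)
qed

lemma scaleC_minus_right: "c *\<^sub>C (- (x::'a::cvec)) = - (c *\<^sub>C x)"
proof -
  have "c *\<^sub>C x + c *\<^sub>C (-x) = 0" by (metis scaleC_add_right add.right_inverse scaleC_zero_right)
  thus ?thesis by (metis add.commute eq_neg_iff_add_eq_0)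
qed

lemma scaleC_diff_right: "c *\<^sub>C ((x::'a::cvec) - y) = c *\<^sub>C x - c *\<^sub>C y"
  by (simp only: diff_conv_add_uminus scaleC_add_right scaleC_minus_right)

lemma scaleC_diff_left: "(c - d) *\<^sub>C (x::'a::cvec) = c *\<^sub>C x - d *\<^sub>C x"
  by (simp only: diff_conv_add_uminus scaleC_add_left scaleC_minus_left)

lemma scaleC_sum_right: "c *\<^sub>C sum f A = (\<Sum>i\<in>A. c *\<^sub>C (f i :: 'a::cvec))"
  by (induction A rule: infinite_finite_induct) (auto simp: scaleC_add_right)

lemma scaleC_sum_left: "(sum f A) *\<^sub>C (x::'a::cvec) = (\<Sum>i\<in>A. f i *\<^sub>C x)"
  by (induction A rule: infinite_finite_induct) (auto simp: scaleC_add_left)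

lemma scaleC_complex_eq[simp]: "c *\<^sub>C (z::complex) = c * z"
  by (simp add: scaleC_complex_def)

lemma scaleC_fun_apply[simp]: "(c *\<^sub>C f) x = c *\<^sub>C (f x :: 'b::cvec)"
  by (simp add: scaleC_fun_def)

lemmas scaleC_simps = scaleC_add_right scaleC_add_left scaleC_scaleC scaleC_one
  scaleC_minus_left scaleC_minus_right scaleC_diff_left scaleC_diff_right

section \<open>Linear maps\<close>

lemma clinearI: "(\<And>x y. f (x + y) = f x + f y) \<Longrightarrow> (\<And>c x. f (c *\<^sub>C x) = c *\<^sub>C f x) \<Longrightarrow> clinear f"
  by (auto simp: clinear_def)

lemma clinear_add: "clinear f \<Longrightarrow> f (x + y) = f x + f y"
  by (simp add: clinear_def)
lemma clinear_scale: "clinear f \<Longrightarrow> f (c *\<^sub>C x) = c *\<^sub>C f x"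
  by (simp add: clinear_def)
lemma clinear_zero: "clinear f \<Longrightarrow> f 0 = 0"
  using clinear_scale[of f 0 0] by simp
lemma clinear_uminus: "clinear f \<Longrightarrow> f (- x) = - f x"
  by (metis add.right_inverse add_eq_0_iff clinear_add clinear_zero)
lemma clinear_diff: "clinear f \<Longrightarrow> f (x - y) = f x - f y"
  by (simp only: clinear_add clinear_uminus diff_conv_add_uminus)
lemma clinear_sum: "clinear f \<Longrightarrow> f (sum g A) = (\<Sum>i\<in>A. f (g i))"
  by (induction A rule: infinite_finite_induct) (auto simp: clinear_add clinear_zero)

lemma clinear_id: "clinear id" by (simp add: clinear_def)
lemma clinear_comp: "clinear f \<Longrightarrow> clinear g \<Longrightarrow> clinear (\<lambda>x. f (g x))"
  by (simp add: clinear_def)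
lemma clinear_plus: "clinear f \<Longrightarrow> clinear g \<Longrightarrow> clinear (\<lambda>x. f x + g x)"
  by (simp add: clinear_def scaleC_add_right)
lemma clinear_funpow: fixes f :: "'a::cvec \<Rightarrow> 'a" assumes "clinear f" shows "clinear (f ^^ n)"
proof (induction n)
  case 0 show ?case by (simp add: clinear_def)
next
  case (Suc n) show ?case using clinear_comp[OF assms Suc] by (simp add: o_def)
qed

lemma clinear_fun: "(\<And>t. clinear (\<lambda>p. F p t)) \<Longrightarrow> clinear F"
  by (auto simp: clinear_def fun_eq_iff)
lemma clinear_app: "clinear F \<Longrightarrow> clinear (\<lambda>p. F p t)"
  by (auto simp: clinear_def)

lemma cbilinearI: "(\<And>y. clinear (\<lambda>x. f x y)) \<Longrightarrow> (\<And>x. clinear (f x)) \<Longrightarrow> cbilinear f"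
  by (simp add: cbilinear_def)
lemma cbil_l: "cbilinear f \<Longrightarrow> clinear (\<lambda>x. f x y)" by (simp add: cbilinear_def)
lemma cbil_r: "cbilinear f \<Longrightarrow> clinear (f x)" by (simp add: cbilinear_def)
lemma cbil_zero_l: "cbilinear f \<Longrightarrow> f 0 y = 0"
  using clinear_zero[OF cbil_l] by blast
lemma cbil_zero_r: "cbilinear f \<Longrightarrow> f x 0 = 0"
  using clinear_zero[OF cbil_r] by blast

lemma clinear_funpow_commute: fixes P Q :: "'a \<Rightarrow> 'a"
  assumes "\<And>x. P (Q x) = Q (P x)" shows "P ((Q ^^ n) x) = (Q ^^ n) (P x)"
  by (induction n) (auto simp: assms)

section \<open>Separating spaces\<close>

class sepvec = cvec +
  assumes sep0: "x \<noteq> 0 \<Longrightarrow> \<exists>\<phi>::'a \<Rightarrow> complex. (\<forall>x y. \<phi> (x + y) = \<phi> x + \<phi> y) \<and> (\<forall>c x. \<phi> (c *\<^sub>C x) = c * \<phi> x) \<and> \<phi> x \<noteq> 0"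

lemma sep: "(x::'a::sepvec) \<noteq> 0 \<Longrightarrow> \<exists>\<phi>::'a \<Rightarrow> complex. clinear \<phi> \<and> \<phi> x \<noteq> 0"
  using sep0[of x] by (auto simp: clinear_def)

instance complex :: sepvec
  by standard (rule exI[of _ id], simp)

instance "fun" :: (type, sepvec) sepvec
proof
  fix x :: "'a \<Rightarrow> 'b"
  assume "x \<noteq> 0"
  then obtain i where "x i \<noteq> 0" by (metis ext zero_fun_def)
  then obtain \<phi> :: "'b \<Rightarrow> complex" where "clinear \<phi>" "\<phi> (x i) \<noteq> 0" using sep by blast
  thus "\<exists>\<phi>::('a\<Rightarrow>'b) \<Rightarrow> complex. (\<forall>x y. \<phi> (x + y) = \<phi> x + \<phi> y) \<and> (\<forall>c x. \<phi> (c *\<^sub>C x) = c * \<phi> x) \<and> \<phi> x \<noteq> 0"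
    by (intro exI[of _ "\<lambda>f. \<phi> (f i)"]) (auto simp: clinear_def)
qed

instance tensor :: (cvec, cvec) sepvec
proof
  fix x :: "('a,'b) tensor"
  assume "x \<noteq> 0"
  then have "rep_tensor x \<noteq> 0" by (metis rep_tensor_inject zero_tensor.rep_eq)
  then obtain \<beta> where b: "rep_tensor x \<beta> \<noteq> 0" by (metis ext zero_fun_def)
  show "\<exists>\<phi>::('a,'b) tensor \<Rightarrow> complex. (\<forall>x y. \<phi> (x + y) = \<phi> x + \<phi> y) \<and> (\<forall>c x. \<phi> (c *\<^sub>C x) = c * \<phi> x) \<and> \<phi> x \<noteq> 0"
    by (intro exI[of _ "\<lambda>t. rep_tensor t \<beta>"])
      (use b in \<open>simp add: plus_tensor.rep_eq scaleC_tensor.rep_eq\<close>)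
qed

lemma sep_eq:
  fixes x y :: "'a::sepvec"
  assumes "\<And>\<phi>::'a \<Rightarrow> complex. clinear \<phi> \<Longrightarrow> \<phi> x = \<phi> y"
  shows "x = y"
proof (rule ccontr)
  assume "x \<noteq> y"
  then have "x - y \<noteq> 0" by simp
  then obtain \<phi> :: "'a \<Rightarrow> complex" where "clinear \<phi>" "\<phi> (x - y) \<noteq> 0" using sep by blast
  with assms show False by (simp add: clinear_diff)
qed



section \<open>Tensor products\<close>

lemma tphi_add_left: "tphi (a1 + a2) b = tphi a1 b + tphi a2 b"
  by (auto simp: fun_eq_iff tphi_def cbilinear_def clinear_def)
lemma tphi_add_right: "tphi a (b1 + b2) = tphi a b1 + tphi a b2"
  by (auto simp: fun_eq_iff tphi_def cbilinear_def clinear_def)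
lemma tphi_scale_left: "tphi (c *\<^sub>C a) b = c *\<^sub>C tphi a b"
  by (auto simp: fun_eq_iff tphi_def cbilinear_def clinear_def)
lemma tphi_scale_right: "tphi a (c *\<^sub>C b) = c *\<^sub>C tphi a b"
  by (auto simp: fun_eq_iff tphi_def cbilinear_def clinear_def)

lemma tensor_add_left: "(a1 + a2) \<otimes> b = a1 \<otimes> b + a2 \<otimes> b"
  by transfer (rule tphi_add_left)
lemma tensor_add_right: "a \<otimes> (b1 + b2) = a \<otimes> b1 + a \<otimes> b2"
  by transfer (rule tphi_add_right)
lemma tensor_scale_left: "(c *\<^sub>C a) \<otimes> b = c *\<^sub>C (a \<otimes> b)"
  by transfer (rule tphi_scale_left)
lemma tensor_scale_right: "a \<otimes> (c *\<^sub>C b) = c *\<^sub>C (a \<otimes> b)"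
  by transfer (rule tphi_scale_right)

lemma cbilinear_tensor: "cbilinear (\<otimes>)"
  by (auto simp: cbilinear_def clinear_def tensor_add_left tensor_add_right
      tensor_scale_left tensor_scale_right)

lemma tensor_zero_left[simp]: "0 \<otimes> b = 0"
  using cbil_zero_l[OF cbilinear_tensor] .
lemma tensor_zero_right[simp]: "a \<otimes> 0 = 0"
  using cbil_zero_r[OF cbilinear_tensor] .

lemma neg_scale: "- (x::'a::cvec) = (-1) *\<^sub>C x"
  by (simp add: scaleC_minus_left scaleC_one)

lemma tensor_induct[case_names zero pure add scale]:
  assumes "P 0" "\<And>a b. P (a \<otimes> b)" "\<And>x y. P x \<Longrightarrow> P y \<Longrightarrow> P (x + y)"
    "\<And>c x. P x \<Longrightarrow> P (c *\<^sub>C x)"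
  shows "P t"
proof -
  have "x \<in> cspan (range (\<lambda>(a, b). tphi a b)) \<Longrightarrow> (\<forall>t. rep_tensor t = x \<longrightarrow> P t)" for x :: "(('a \<Rightarrow> 'b \<Rightarrow> complex) \<Rightarrow> complex)"
  proof (induction rule: cspan.induct)
    case cspan_zero
    then show ?case using assms(1) by (metis rep_tensor_inject zero_tensor.rep_eq)
  next
    case (cspan_base x)
    then obtain a b where "x = tphi a b" by auto
    then show ?case using assms(2) by (metis rep_tensor_inject tensor.rep_eq)
  next
    case (cspan_add x y)
    show ?case
    proof (intro allI impI)
      fix t assume t: "rep_tensor t = x + y"
      have "P (abs_tensor x)" "P (abs_tensor y)"
        using cspan_add by (auto simp: abs_tensor_inverse)
      moreover have "t = abs_tensor x + abs_tensor y"
        using t cspan_add(1,2)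
        by (metis abs_tensor_inverse rep_tensor_inject plus_tensor.rep_eq)
      ultimately show "P t" using assms(3) by simp
    qed
  next
    case (cspan_scale x c)
    show ?case
    proof (intro allI impI)
      fix t assume t: "rep_tensor t = c *\<^sub>C x"
      have "P (abs_tensor x)"
        using cspan_scale by (auto simp: abs_tensor_inverse)
      moreover have "t = c *\<^sub>C abs_tensor x"
        using t cspan_scale(1)
        by (metis abs_tensor_inverse rep_tensor_inject scaleC_tensor.rep_eq)
      ultimately show "P t" using assms(4) by simp
    qed
  next
    case (cspan_uminus x)
    show ?case
    proof (intro allI impI)
      fix t assume t: "rep_tensor t = - x"
      have "P (abs_tensor x)"
        using cspan_uminus by (auto simp: abs_tensor_inverse)
      moreover have "t = (-1) *\<^sub>C abs_tensor x"
        using t cspan_uminus(1)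
        by (metis abs_tensor_inverse rep_tensor_inject uminus_tensor.rep_eq neg_scale)
      ultimately show "P t" using assms(4) by simp
    qed
  next
    case (cspan_diff x y)
    show ?case
    proof (intro allI impI)
      fix t assume t: "rep_tensor t = x - y"
      have "P (abs_tensor x)" "P (abs_tensor y)"
        using cspan_diff by (auto simp: abs_tensor_inverse)
      moreover have "t = abs_tensor x + (-1) *\<^sub>C abs_tensor y"
        using t cspan_diff(1,2)
        by (metis abs_tensor_inverse rep_tensor_inject diff_conv_add_uminus minus_tensor.rep_eq neg_scale)
      ultimately show "P t" using assms(3,4) by simp
    qed
  qed
  then show ?thesis using rep_tensor by blast
qed

lemma tensor_lin_eq:
  assumes "clinear g" "clinear h" "\<And>a b. g (a \<otimes> b) = h (a \<otimes> b)"
  shows "g t = h t"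
proof (induction t rule: tensor_induct)
  case zero then show ?case using assms by (simp add: clinear_zero)
next
  case (pure a b) then show ?case using assms by simp
next
  case (add x y) then show ?case using assms by (simp add: clinear_add)
next
  case (scale c x) then show ?case using assms by (simp add: clinear_scale)
qed

section \<open>Linear extension\<close>

lemma tlift_exists:
  fixes F :: "'a::cvec \<Rightarrow> 'b::cvec \<Rightarrow> 'c::sepvec"
  assumes F: "cbilinear F"
  shows "\<exists>g. clinear g \<and> (\<forall>a b. g (a \<otimes> b) = F a b)"
proof -
  have bil: "cbilinear (\<lambda>a b. \<phi> (F a b))" if "clinear \<phi>" for \<phi> :: "'c \<Rightarrow> complex"
    using that F by (auto simp: cbilinear_def clinear_def)
  have ex: "x \<in> cspan (range (\<lambda>(a, b). tphi a b)) \<Longrightarrow>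
      \<exists>c. \<forall>\<phi>::'c\<Rightarrow>complex. clinear \<phi> \<longrightarrow> \<phi> c = x (\<lambda>a b. \<phi> (F a b))" for x
  proof (induction rule: cspan.induct)
    case cspan_zero
    then show ?case by (intro exI[of _ 0]) (auto simp: clinear_zero)
  next
    case (cspan_base x)
    then obtain a b where "x = tphi a b" by auto
    then show ?case using bil by (intro exI[of _ "F a b"]) (auto simp: tphi_def)
  next
    case (cspan_add x y)
    then obtain c d where c: "\<And>\<phi>::'c\<Rightarrow>complex. clinear \<phi> \<Longrightarrow> \<phi> c = x (\<lambda>a b. \<phi> (F a b))"
      and d: "\<And>\<phi>::'c\<Rightarrow>complex. clinear \<phi> \<Longrightarrow> \<phi> d = y (\<lambda>a b. \<phi> (F a b))" by blast
    show ?case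
    proof (intro exI allI impI)
      fix \<phi> :: "'c \<Rightarrow> complex" assume p: "clinear \<phi>"
      show "\<phi> (c + d) = (x + y) (\<lambda>a b. \<phi> (F a b))"
        by (simp only: clinear_add[OF p] c[OF p] d[OF p] plus_fun_apply)
    qed
  next
    case (cspan_scale x e)
    then obtain c where c: "\<And>\<phi>::'c\<Rightarrow>complex. clinear \<phi> \<Longrightarrow> \<phi> c = x (\<lambda>a b. \<phi> (F a b))" by blast
    show ?case
    proof (intro exI allI impI)
      fix \<phi> :: "'c \<Rightarrow> complex" assume p: "clinear \<phi>"
      show "\<phi> (e *\<^sub>C c) = (e *\<^sub>C x) (\<lambda>a b. \<phi> (F a b))"
        by (simp only: clinear_scale[OF p] c[OF p] scaleC_fun_apply)
    qed
  next
    case (cspan_uminus x)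
    then obtain c where c: "\<And>\<phi>::'c\<Rightarrow>complex. clinear \<phi> \<Longrightarrow> \<phi> c = x (\<lambda>a b. \<phi> (F a b))" by blast
    show ?case
    proof (intro exI allI impI)
      fix \<phi> :: "'c \<Rightarrow> complex" assume p: "clinear \<phi>"
      show "\<phi> (- c) = (- x) (\<lambda>a b. \<phi> (F a b))"
        by (simp only: clinear_uminus[OF p] c[OF p] fun_Compl_def uminus_apply)
    qed
  next
    case (cspan_diff x y)
    then obtain c d where c: "\<And>\<phi>::'c\<Rightarrow>complex. clinear \<phi> \<Longrightarrow> \<phi> c = x (\<lambda>a b. \<phi> (F a b))"
      and d: "\<And>\<phi>::'c\<Rightarrow>complex. clinear \<phi> \<Longrightarrow> \<phi> d = y (\<lambda>a b. \<phi> (F a b))" by blast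
    show ?case
    proof (intro exI allI impI)
      fix \<phi> :: "'c \<Rightarrow> complex" assume p: "clinear \<phi>"
      show "\<phi> (c - d) = (x - y) (\<lambda>a b. \<phi> (F a b))"
        by (simp only: clinear_diff[OF p] c[OF p] d[OF p] minus_apply)
    qed
  qed
  define g where "g t = (SOME c. \<forall>\<phi>::'c\<Rightarrow>complex. clinear \<phi> \<longrightarrow> \<phi> c = rep_tensor t (\<lambda>a b. \<phi> (F a b)))"
    for t :: "('a, 'b) tensor"
  have gspec: "\<phi> (g t) = rep_tensor t (\<lambda>a b. \<phi> (F a b))" if "clinear \<phi>" for t and \<phi> :: "'c \<Rightarrow> complex"
    using someI_ex[OF ex[OF rep_tensor[of t]]] that unfolding g_def by blast
  have uniq: "g t = c" if "\<And>\<phi>::'c\<Rightarrow>complex. clinear \<phi> \<Longrightarrow> \<phi> c = rep_tensor t (\<lambda>a b. \<phi> (F a b))" for t c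
    by (rule sep_eq) (simp only: gspec that)
  have "clinear g"
  proof (rule clinearI)
    fix x y show "g (x + y) = g x + g y"
      by (rule uniq) (simp only: clinear_add gspec plus_tensor.rep_eq plus_fun_apply)
  next
    fix c x show "g (c *\<^sub>C x) = c *\<^sub>C g x"
      by (rule uniq) (simp only: clinear_scale gspec scaleC_tensor.rep_eq scaleC_fun_apply)
  qed
  moreover have "g (a \<otimes> b) = F a b" for a b
    by (rule uniq) (simp add: tensor.rep_eq tphi_def bil)
  ultimately show ?thesis by blast
qed

lemma tlift_spec:
  fixes F :: "'a::cvec \<Rightarrow> 'b::cvec \<Rightarrow> 'c::sepvec"
  assumes "cbilinear F"
  shows "clinear (tlift F)" "tlift F (a \<otimes> b) = F a b"
  using someI_ex[OF tlift_exists[OF assms]] unfolding tlift_def[symmetric] by auto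

lemma tlift_unique:
  fixes F :: "'a::cvec \<Rightarrow> 'b::cvec \<Rightarrow> 'c::sepvec"
  assumes "cbilinear F" "clinear g" "\<And>a b. g (a \<otimes> b) = F a b"
  shows "tlift F t = g t"
  by (rule tensor_lin_eq) (use assms tlift_spec[OF assms(1)] in auto)

lemma tlift_add:
  fixes F G :: "'a::cvec \<Rightarrow> 'b::cvec \<Rightarrow> 'c::sepvec"
  assumes "cbilinear F" "cbilinear G"
  shows "tlift (\<lambda>a b. F a b + G a b) t = tlift F t + tlift G t"
proof -
  have "cbilinear (\<lambda>a b. F a b + G a b)"
    using assms by (auto simp: cbilinear_def intro: clinear_plus)
  then show ?thesis
    by (rule tlift_unique) (use assms in \<open>auto intro: clinear_plus tlift_spec simp: tlift_spec(2)[OF assms(1)] tlift_spec(2)[OF assms(2)]\<close>)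
qed

lemma clinear_scale_map: "clinear g \<Longrightarrow> clinear (\<lambda>x. c *\<^sub>C (g x :: 'a::cvec))"
  by (auto simp: clinear_def scaleC_add_right scaleC_scaleC mult.commute)

lemma tlift_scale:
  fixes F :: "'a::cvec \<Rightarrow> 'b::cvec \<Rightarrow> 'c::sepvec"
  assumes "cbilinear F"
  shows "tlift (\<lambda>a b. c *\<^sub>C F a b) t = c *\<^sub>C tlift F t"
proof -
  have "cbilinear (\<lambda>a b. c *\<^sub>C F a b)"
    using assms by (auto simp: cbilinear_def intro: clinear_scale_map)
  then show ?thesis
    by (rule tlift_unique) (use assms in \<open>auto intro: clinear_scale_map tlift_spec simp: tlift_spec(2)[OF assms(1)]\<close>)
qed

text \<open>Linearity of tlift in a parameter.\<close>
lemma tlift_param_linear: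
  fixes G :: "'p::cvec \<Rightarrow> 'a::cvec \<Rightarrow> 'b::cvec \<Rightarrow> 'c::sepvec"
  assumes "\<And>p. cbilinear (G p)" "\<And>a b. clinear (\<lambda>p. G p a b)"
  shows "clinear (\<lambda>p. tlift (G p) t)"
proof (rule clinearI)
  fix x y
  have "\<And>a b. G (x + y) a b = G x a b + G y a b"
    using clinear_add[OF assms(2)] by simp
  then have "G (x + y) = (\<lambda>a b. G x a b + G y a b)" by (simp add: fun_eq_iff)
  then show "tlift (G (x + y)) t = tlift (G x) t + tlift (G y) t"
    using tlift_add[OF assms(1) assms(1)] by simp
next
  fix c x
  have "\<And>a b. G (c *\<^sub>C x) a b = c *\<^sub>C G x a b"
    using clinear_scale[OF assms(2)] by simp
  then have "G (c *\<^sub>C x) = (\<lambda>a b. c *\<^sub>C G x a b)" by (simp add: fun_eq_iff)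
  then show "tlift (G (c *\<^sub>C x)) t = c *\<^sub>C tlift (G x) t"
    using tlift_scale[OF assms(1)] by simp
qed

lemma tlift_param_bil:
  fixes G :: "'p::cvec \<Rightarrow> 'a::cvec \<Rightarrow> 'b::cvec \<Rightarrow> 'c::sepvec"
  assumes "\<And>p. cbilinear (G p)" "\<And>a b. clinear (\<lambda>p. G p a b)"
  shows "cbilinear (\<lambda>t p. tlift (G p) t)"
  using tlift_param_linear[OF assms] tlift_spec(1)[OF assms(1)]
  by (auto simp: cbilinear_def)

lemma tmap_spec:
  fixes f :: "'a::cvec \<Rightarrow> 'c::cvec" and g :: "'b::cvec \<Rightarrow> 'd::cvec"
  assumes "clinear f" "clinear g"
  shows "clinear (tmap f g)" "tmap f g (a \<otimes> b) = f a \<otimes> g b"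
proof -
  have "cbilinear (\<lambda>a b. f a \<otimes> g b)"
    using assms cbilinear_tensor
    by (auto simp: cbilinear_def clinear_def tensor_add_left tensor_add_right
      tensor_scale_left tensor_scale_right)
  then show "clinear (tmap f g)" "tmap f g (a \<otimes> b) = f a \<otimes> g b"
    unfolding tmap_def by (auto simp: tlift_spec)
qed



section \<open>Series bounded below\<close>

definition lbN :: "int \<Rightarrow> (int \<Rightarrow> 'a::zero) \<Rightarrow> bool" where
  "lbN N s \<longleftrightarrow> (\<forall>m<N. s m = 0)"

definition lb :: "(int \<Rightarrow> 'a::zero) \<Rightarrow> bool" where
  "lb s \<longleftrightarrow> (\<exists>N. lbN N s)"

lemma lbN_mono: "lbN N s \<Longrightarrow> M \<le> N \<Longrightarrow> lbN M s"
  by (auto simp: lbN_def)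

lemma lbN_D: "lbN N s \<Longrightarrow> s m \<noteq> 0 \<Longrightarrow> N \<le> m"
  by (auto simp: lbN_def not_less[symmetric])

lemma lbI: "lbN N s \<Longrightarrow> lb s" by (auto simp: lb_def)

lemma lbN_add: "lbN N s \<Longrightarrow> lbN N t \<Longrightarrow> lbN N (s + (t :: int \<Rightarrow> 'a::monoid_add))"
  by (auto simp: lbN_def)
lemma lbN_scale: "lbN N s \<Longrightarrow> lbN N (c *\<^sub>C (s :: int \<Rightarrow> 'a::cvec))"
  by (auto simp: lbN_def)
lemma lbN_zero: "lbN N 0" by (auto simp: lbN_def)

lemma lb_add: "lb s \<Longrightarrow> lb t \<Longrightarrow> lb (s + (t :: int \<Rightarrow> 'a::monoid_add))"
  unfolding lb_def by (metis lbN_add lbN_mono min.cobounded1 min.cobounded2)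
lemma lb_scale: "lb s \<Longrightarrow> lb (c *\<^sub>C (s :: int \<Rightarrow> 'a::cvec))"
  unfolding lb_def using lbN_scale by blast
lemma lb_zero: "lb 0" unfolding lb_def using lbN_zero by blast

lemma lbN_negser: "lbN N s \<Longrightarrow> lbN N (negser s)"
  by (auto simp: lbN_def negser_def)
lemma lb_negser: "lb s \<Longrightarrow> lb (negser s)"
  unfolding lb_def using lbN_negser by blast

lemma lb_lcoeff: "lb (lcoeff f)"
  using lcoeff[of f] by (auto simp: lb_def lbN_def)

lemma lcoeff_add: "lcoeff (f + g) = lcoeff f + lcoeff g"
  by (simp add: plus_laurent.rep_eq)
lemma lcoeff_scale: "lcoeff (c *\<^sub>C f) = c *\<^sub>C lcoeff f"
  by (simp add: scaleC_laurent.rep_eq)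
lemma lcoeff_lone: "lcoeff lone = (\<lambda>n. if n = 0 then 1 else 0)"
  by (simp add: lone.rep_eq)

lemma negser_add: "negser (s + t) = negser s + negser t"
  by (auto simp: negser_def fun_eq_iff)
lemma negser_scale: "negser (c *\<^sub>C s) = c *\<^sub>C negser s"
  by (auto simp: negser_def fun_eq_iff scaleC_minus_right)
lemma negser_delta: "negser (\<lambda>n. if n = 0 then c else 0) = (\<lambda>n. if n = 0 then c else 0)"
  by (auto simp: negser_def fun_eq_iff)

lemma cbilinear_scaleC: "cbilinear ((*\<^sub>C) :: complex \<Rightarrow> 'a::cvec \<Rightarrow> 'a)"
  by (auto simp: cbilinear_def clinear_def scaleC_add_left scaleC_add_right scaleC_scaleC mult.commute)

section \<open>Products of series\<close>

lemma conv_eq: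
  assumes B: "cbilinear B" and f: "lbN Nf f" and g: "lbN Ng g" and "A \<le> Nf" "m - Ng \<le> C"
  shows "conv B f g m = (\<Sum>p\<in>{A..C}. B (f p) (g (m - p)))"
  unfolding conv_def
proof (rule sum.mono_neutral_left)
  show "finite {A..C}" by simp
  show "{p. f p \<noteq> 0 \<and> g (m - p) \<noteq> 0} \<subseteq> {A..C}"
    using lbN_D[OF f] lbN_D[OF g] assms(4,5) by fastforce
  show "\<forall>i\<in>{A..C} - {p. f p \<noteq> 0 \<and> g (m - p) \<noteq> 0}. B (f i) (g (m - i)) = 0"
    using cbil_zero_l[OF B] cbil_zero_r[OF B] by auto
qed

lemma lbN_conv:
  assumes f: "lbN Nf f" and g: "lbN Ng g"
  shows "lbN (Nf + Ng) (conv B f g)"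
  unfolding lbN_def
proof (intro allI impI)
  fix m assume "m < Nf + Ng"
  then have e: "{p. f p \<noteq> 0 \<and> g (m - p) \<noteq> 0} = {}"
    using lbN_D[OF f] lbN_D[OF g] by fastforce
  show "conv B f g m = 0" unfolding conv_def e by simp
qed

lemma lb_conv: "lb f \<Longrightarrow> lb g \<Longrightarrow> lb (conv B f g)"
  unfolding lb_def using lbN_conv by blast

lemma conv_add_left:
  assumes B: "cbilinear B" and "lb f1" "lb f2" "lb g"
  shows "conv B (f1 + f2) g = conv B f1 g + conv B f2 g"
proof
  fix m
  obtain N1 N2 Ng where n: "lbN N1 f1" "lbN N2 f2" "lbN Ng g" using assms by (auto simp: lb_def)
  define N where "N = min N1 N2"
  have n': "lbN N f1" "lbN N f2" "lbN N (f1 + f2)"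
    using n lbN_mono lbN_add unfolding N_def by (metis min.cobounded1 min.cobounded2)+
  show "conv B (f1 + f2) g m = (conv B f1 g + conv B f2 g) m"
    using conv_eq[OF B n'(3) n(3), where A=N and C="m - Ng" and m=m] conv_eq[OF B n'(1) n(3), where A=N and C="m - Ng" and m=m]
      conv_eq[OF B n'(2) n(3), where A=N and C="m - Ng" and m=m] clinear_add[OF cbil_l[OF B]]
    by (simp add: sum.distrib)
qed

lemma conv_add_right:
  assumes B: "cbilinear B" and "lb f" "lb g1" "lb g2"
  shows "conv B f (g1 + g2) = conv B f g1 + conv B f g2"
proof
  fix m
  obtain N1 N2 Nf where n: "lbN N1 g1" "lbN N2 g2" "lbN Nf f" using assms by (auto simp: lb_def)
  define N where "N = min N1 N2"
  have n': "lbN N g1" "lbN N g2" "lbN N (g1 + g2)"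
    using n lbN_mono lbN_add unfolding N_def by (metis min.cobounded1 min.cobounded2)+
  show "conv B f (g1 + g2) m = (conv B f g1 + conv B f g2) m"
    using conv_eq[OF B n(3) n'(3), where A=Nf and C="m - N" and m=m] conv_eq[OF B n(3) n'(1), where A=Nf and C="m - N" and m=m]
      conv_eq[OF B n(3) n'(2), where A=Nf and C="m - N" and m=m] clinear_add[OF cbil_r[OF B]]
    by (simp add: sum.distrib)
qed

lemma conv_scale_left:
  assumes B: "cbilinear B" and "lb f" "lb g"
  shows "conv B (c *\<^sub>C f) g = c *\<^sub>C conv B f g"
proof
  fix m
  obtain Nf Ng where n: "lbN Nf f" "lbN Ng g" using assms by (auto simp: lb_def)
  show "conv B (c *\<^sub>C f) g m = (c *\<^sub>C conv B f g) m"
    using conv_eq[OF B lbN_scale[OF n(1), of c] n(2), where A=Nf and C="m - Ng" and m=m] conv_eq[OF B n(1) n(2), where A=Nf and C="m - Ng" and m=m]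
      clinear_scale[OF cbil_l[OF B]]
    by (simp add: scaleC_sum_right)
qed

lemma conv_scale_right:
  assumes B: "cbilinear B" and "lb f" "lb g"
  shows "conv B f (c *\<^sub>C g) = c *\<^sub>C conv B f g"
proof
  fix m
  obtain Nf Ng where n: "lbN Nf f" "lbN Ng g" using assms by (auto simp: lb_def)
  show "conv B f (c *\<^sub>C g) m = (c *\<^sub>C conv B f g) m"
    using conv_eq[OF B n(1) lbN_scale[OF n(2), of c], where A=Nf and C="m - Ng" and m=m] conv_eq[OF B n(1) n(2), where A=Nf and C="m - Ng" and m=m]
      clinear_scale[OF cbil_r[OF B]]
    by (simp add: scaleC_sum_right)
qed

lemma conv_delta_left:
  assumes B: "cbilinear B"
  shows "conv B (\<lambda>n. if n = 0 then c else 0) g = (\<lambda>m. B c (g m))"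
proof
  fix m
  have "{p. (if p = 0 then c else 0) \<noteq> 0 \<and> g (m - p) \<noteq> 0} = (if c \<noteq> 0 \<and> g m \<noteq> 0 then {0} else {})"
    by auto
  then show "conv B (\<lambda>n. if n = 0 then c else 0) g m = B c (g m)"
    using cbil_zero_l[OF B] cbil_zero_r[OF B] by (auto simp: conv_def)
qed

lemma conv_delta_right:
  assumes B: "cbilinear B"
  shows "conv B f (\<lambda>n. if n = 0 then c else 0) = (\<lambda>m. B (f m) c)"
proof
  fix m
  have "{p. f p \<noteq> 0 \<and> (if m - p = 0 then c else 0) \<noteq> 0} = (if c \<noteq> 0 \<and> f m \<noteq> 0 then {m} else {})"
    by auto
  then show "conv B f (\<lambda>n. if n = 0 then c else 0) m = B (f m) c"
    using cbil_zero_l[OF B] cbil_zero_r[OF B] by (auto simp: conv_def)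
qed

section \<open>Exponential action\<close>

lemma exp_act_eq:
  fixes D :: "'a::cvec \<Rightarrow> 'a"
  assumes D: "clinear D" and s: "lbN N s" and K: "m - N \<le> int K"
  shows "exp_act D s m = (\<Sum>k\<le>K. (1 / of_nat (fact k) :: complex) *\<^sub>C (D ^^ k) (s (m - int k)))"
  unfolding exp_act_def
proof (rule sum.mono_neutral_left)
  show "finite {..K}" by simp
  show "{k. s (m - int k) \<noteq> 0} \<subseteq> {..K}"
    using lbN_D[OF s] K by fastforce
  show "\<forall>i\<in>{..K} - {k. s (m - int k) \<noteq> 0}. (1 / of_nat (fact i) :: complex) *\<^sub>C (D ^^ i) (s (m - int i)) = 0"
    using clinear_zero[OF clinear_funpow[OF D]] by auto
qed

lemma lbN_exp_act:
  assumes s: "lbN N s"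
  shows "lbN N (exp_act D s)"
  unfolding lbN_def
proof (intro allI impI)
  fix m assume "m < N"
  then have "{k. s (m - int k) \<noteq> 0} = {}"
    using lbN_D[OF s] by fastforce
  then show "exp_act D s m = 0" by (simp add: exp_act_def)
qed

lemma exp_act_zero: "exp_act D 0 = 0"
  by (auto simp: exp_act_def fun_eq_iff)

lemma exp_act_add:
  fixes D :: "'a::cvec \<Rightarrow> 'a"
  assumes D: "clinear D" and "lb s" "lb t"
  shows "exp_act D (s + t) = exp_act D s + exp_act D t"
proof
  fix m
  obtain N1 N2 where n: "lbN N1 s" "lbN N2 t" using assms by (auto simp: lb_def)
  define N where "N = min N1 N2"
  have n': "lbN N s" "lbN N t" "lbN N (s + t)"
    using n lbN_mono lbN_add unfolding N_def by (metis min.cobounded1 min.cobounded2)+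
  define K where "K = nat (m - N)"
  have K: "m - N \<le> int K" unfolding K_def by simp
  show "exp_act D (s + t) m = (exp_act D s + exp_act D t) m"
    using exp_act_eq[OF D n'(1) K] exp_act_eq[OF D n'(2) K] exp_act_eq[OF D n'(3) K]
      clinear_add[OF clinear_funpow[OF D]]
    by (simp add: sum.distrib scaleC_add_right)
qed

lemma exp_act_scale:
  fixes D :: "'a::cvec \<Rightarrow> 'a"
  assumes D: "clinear D" and "lb s"
  shows "exp_act D (c *\<^sub>C s) = c *\<^sub>C exp_act D s"
proof
  fix m
  obtain N where n: "lbN N s" using assms by (auto simp: lb_def)
  define K where "K = nat (m - N)"
  have K: "m - N \<le> int K" unfolding K_def by simp
  show "exp_act D (c *\<^sub>C s) m = (c *\<^sub>C exp_act D s) m"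
    using exp_act_eq[OF D n K] exp_act_eq[OF D lbN_scale[OF n] K, of c]
      clinear_scale[OF clinear_funpow[OF D]]
    by (simp add: scaleC_sum_right scaleC_scaleC mult.commute)
qed

lemma exp_act_conv:
  fixes D :: "'a::cvec \<Rightarrow> 'a"
  assumes D: "clinear D" and "lb g" "lb S"
  shows "exp_act D (conv (*\<^sub>C) g S) = conv (*\<^sub>C) g (exp_act D S)"
proof
  fix m
  obtain Ng Ns where n: "lbN Ng g" "lbN Ns S" using assms by (auto simp: lb_def)
  define K where "K = nat (m - Ng - Ns)"
  define c :: "nat \<Rightarrow> complex" where "c k = 1 / of_nat (fact k)" for k
  have Dk: "clinear (D ^^ k)" for k using clinear_funpow[OF D] .
  have K: "m - (Ng + Ns) \<le> int K" unfolding K_def by simp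
  have "exp_act D (conv (*\<^sub>C) g S) m = (\<Sum>k\<le>K. c k *\<^sub>C (D ^^ k) (conv (*\<^sub>C) g S (m - int k)))"
    using exp_act_eq[OF D lbN_conv[OF n] K] unfolding c_def .
  also have "\<dots> = (\<Sum>k\<le>K. c k *\<^sub>C (D ^^ k) (\<Sum>p\<in>{Ng..m - Ns}. g p *\<^sub>C S (m - int k - p)))"
    by (intro sum.cong refl arg_cong[where f="\<lambda>x. c _ *\<^sub>C (D ^^ _) x"]
        conv_eq[OF cbilinear_scaleC n]) auto
  also have "\<dots> = (\<Sum>k\<le>K. \<Sum>p\<in>{Ng..m - Ns}. g p *\<^sub>C (c k *\<^sub>C (D ^^ k) (S (m - p - int k))))"
    by (simp add: clinear_sum[OF Dk] clinear_scale[OF Dk] scaleC_sum_right scaleC_scaleC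
        mult.commute algebra_simps)
  also have "\<dots> = (\<Sum>p\<in>{Ng..m - Ns}. \<Sum>k\<le>K. g p *\<^sub>C (c k *\<^sub>C (D ^^ k) (S (m - p - int k))))"
    by (rule sum.swap)
  also have "\<dots> = (\<Sum>p\<in>{Ng..m - Ns}. g p *\<^sub>C exp_act D S (m - p))"
  proof (intro sum.cong refl)
    fix p assume "p \<in> {Ng..m - Ns}"
    then have "m - p - Ns \<le> int K" unfolding K_def by auto
    then show "(\<Sum>k\<le>K. g p *\<^sub>C (c k *\<^sub>C (D ^^ k) (S (m - p - int k)))) = g p *\<^sub>C exp_act D S (m - p)"
      using exp_act_eq[OF D n(2), of "m - p" K] unfolding c_def by (simp add: scaleC_sum_right)
  qed
  also have "\<dots> = conv (*\<^sub>C) g (exp_act D S) m"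
    using conv_eq[OF cbilinear_scaleC n(1) lbN_exp_act[OF n(2), of D], where A=Ng and C="m - Ns" and m=m] by simp
  finally show "exp_act D (conv (*\<^sub>C) g S) m = conv (*\<^sub>C) g (exp_act D S) m" .
qed



section \<open>Facts on nonlocal vertex algebras\<close>

lemma nlva_bil: "nlva Y one \<Longrightarrow> cbilinear Y" by (simp add: nlva_def)

lemma yser_lin_l:
  assumes "nlva Y one" shows "clinear (\<lambda>u. yser Y u v)"
  using cbil_l[OF nlva_bil[OF assms], of v]
  by (auto simp: clinear_def yser_def fun_eq_iff)

lemma yser_lin_r:
  assumes "nlva Y one" shows "clinear (yser Y u)"
  using cbil_r[OF nlva_bil[OF assms], of u]
  by (auto simp: clinear_def yser_def fun_eq_iff)

lemma yser_zero_l: "nlva Y one \<Longrightarrow> yser Y 0 v = 0"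
  using clinear_zero[OF yser_lin_l] by blast
lemma yser_zero_r: "nlva Y one \<Longrightarrow> yser Y u 0 = 0"
  using clinear_zero[OF yser_lin_r] by blast

lemma lb_yser:
  assumes "nlva Y one" shows "lb (yser Y u v)"
proof -
  obtain N where N: "\<forall>n>N. Y u v n = 0" using assms unfolding nlva_def by blast
  have "lbN (- N - 1) (yser Y u v)"
    unfolding lbN_def yser_def using N by auto
  then show ?thesis by (rule lbI)
qed

lemma yser_one_left:
  assumes "nlva Y one" shows "yser Y one v = (\<lambda>m. if m = 0 then v else 0)"
  using assms by (auto simp: nlva_def yser_def fun_eq_iff)

lemma lbN_yser_one_right:
  assumes "nlva Y one" shows "lbN 0 (yser Y v one)"
  using assms by (auto simp: nlva_def yser_def lbN_def)

lemma yser_one_right_0: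
  assumes "nlva Y one" shows "yser Y v one 0 = v"
  using assms by (auto simp: nlva_def yser_def)

lemma yser_one_right_1:
  assumes "nlva Y one" shows "yser Y v one 1 = Dop Y one v"
  by (simp add: yser_def Dop_def)

lemma Dop_lin:
  assumes "nlva Y one" shows "clinear (Dop Y one)"
  using clinear_app[OF yser_lin_l[OF assms, where v=one], of 1] unfolding yser_def Dop_def by simp

lemma mult_binom_diff:
  "mult_binom k (\<lambda>a b. F a b - G a b) a b = mult_binom k F a b - mult_binom k G a b"
  by (simp add: mult_binom_def scaleC_diff_right sum_subtractf)

lemma mult_binom_cancel:
  fixes H :: "int \<Rightarrow> int \<Rightarrow> 'a::cvec"
  assumes neg: "\<And>a b. a < 0 \<Longrightarrow> H a b = 0" and z: "\<And>a b. mult_binom k H a b = 0"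
  shows "H a b = 0"
proof (rule ccontr)
  assume "H a b \<noteq> 0"
  then have a0: "a \<ge> 0" using neg[of a b] by force
  define n0 where "n0 = (LEAST n::nat. \<exists>b. H (int n) b \<noteq> 0)"
  have ex: "\<exists>n::nat. \<exists>b. H (int n) b \<noteq> 0"
    using \<open>H a b \<noteq> 0\<close> a0 by (intro exI[of _ "nat a"] exI[of _ b]) simp
  have "\<exists>b. H (int n0) b \<noteq> 0" unfolding n0_def by (rule LeastI_ex[OF ex])
  then obtain b0 where b0: "H (int n0) b0 \<noteq> 0" by blast
  have small: "H a' b' = 0" if "a' < int n0" for a' b'
  proof (cases "a' < 0")
    case True then show ?thesis using neg by blast
  next
    case False
    then have "nat a' < n0" using that by auto
    then have "\<not> (\<exists>b. H (int (nat a')) b \<noteq> 0)" unfolding n0_def by (rule not_less_Least)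
    then show ?thesis using False by auto
  qed
  have "mult_binom k H (int n0) (b0 + int k) =
      (\<Sum>t<k. of_nat (k choose t) *\<^sub>C H (int n0 - int (k - t)) (b0 + int k - int t))
      + of_nat (k choose k) *\<^sub>C H (int n0 - int (k - k)) (b0 + int k - int k)"
    unfolding mult_binom_def lessThan_Suc_atMost[symmetric] sum.lessThan_Suc by simp
  also have "(\<Sum>t<k. of_nat (k choose t) *\<^sub>C H (int n0 - int (k - t)) (b0 + int k - int t)) = 0"
  proof (intro sum.neutral ballI)
    fix t assume "t \<in> {..<k}"
    then have "int n0 - int (k - t) < int n0" by auto
    then show "of_nat (k choose t) *\<^sub>C H (int n0 - int (k - t)) (b0 + int k - int t) = 0"
      using small by simp
  qed
  finally have "mult_binom k H (int n0) (b0 + int k) = H (int n0) b0" by (simp add: scaleC_one)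
  then show False using z b0 by simp
qed

lemma yser_one_right_rec:
  assumes Y: "nlva Y one"
  shows "of_nat (Suc n) *\<^sub>C yser Y u one (int n + 1) = yser Y (Dop Y one u) one (int n)"
proof -
  obtain k where k: "\<forall>a b. assoc_lhs Y k u one one a b = assoc_rhs Y k u one one a b"
    using Y unfolding nlva_def by blast
  define s where "s = yser Y u one"
  define F where "F = (\<lambda>i j. yser Y u (yser Y one one j) i)"
  define G where "G = (\<lambda>a b. yser Y (yser Y u one a) one b)"
  have F: "F i j = (if j = 0 then s i else 0)" for i j
    unfolding F_def s_def yser_one_left[OF Y] using yser_zero_r[OF Y] by auto
  have SP: "subst_plus F a b = (if 0 \<le> b then (of_int (a + b) gchoose nat b) *\<^sub>C s (a + b) else 0)" for a b
  proof -
    have set: "{l::nat. F (a + int l) (b - int l) \<noteq> 0} = (if 0 \<le> b \<and> s (a + b) \<noteq> 0 then {nat b} else {})"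
      by (auto simp: F)
    show ?thesis unfolding subst_plus_def set by (auto simp: F)
  qed
  define H where "H = (\<lambda>a b. subst_plus F a b - G a b)"
  have z: "mult_binom k H a b = 0" for a b
    using k unfolding H_def mult_binom_diff assoc_lhs_def assoc_rhs_def F_def G_def by simp
  have s_neg: "s m = 0" if "m < 0" for m
    using lbN_yser_one_right[OF Y] that unfolding s_def lbN_def by blast
  have neg: "H a b = 0" if "a < 0" for a b
  proof -
    have "G a b = 0" unfolding G_def using s_neg[OF that] yser_zero_l[OF Y] unfolding s_def by simp
    moreover have "subst_plus F a b = 0"
    proof (cases "0 \<le> b \<and> 0 \<le> a + b")
      case True
      then have "(of_int (a + b) :: complex) gchoose nat b = of_nat (nat (a + b) choose nat b)"
        by (simp add: binomial_gbinomial)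
      also have "\<dots> = 0" using True that by (simp add: binomial_eq_0)
      finally show ?thesis using SP True by simp
    next
      case False then show ?thesis using SP s_neg by auto
    qed
    ultimately show ?thesis unfolding H_def by simp
  qed
  have "H 1 (int n) = 0" by (rule mult_binom_cancel[OF neg z])
  moreover have "(of_int (1 + int n) :: complex) gchoose n = of_nat (Suc n)"
  proof -
    have "(of_int (1 + int n) :: complex) = of_nat (Suc n)" by simp
    then show ?thesis by (metis binomial_Suc_n binomial_gbinomial)
  qed
  ultimately have "of_nat (Suc n) *\<^sub>C s (int n + 1) = G 1 (int n)"
    unfolding H_def SP by (simp add: add.commute)
  moreover have "G 1 (int n) = yser Y (Dop Y one u) one (int n)"
    unfolding G_def yser_one_right_1[OF Y] ..
  ultimately show ?thesis unfolding s_def by simp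
qed

lemma yser_one_right:
  assumes Y: "nlva Y one"
  shows "yser Y u one (int n) = (1 / of_nat (fact n) :: complex) *\<^sub>C (Dop Y one ^^ n) u"
proof (induction n arbitrary: u)
  case 0 then show ?case using yser_one_right_0[OF Y] by (simp add: scaleC_one)
next
  case (Suc n)
  have nz: "1 + (of_nat n :: complex) \<noteq> 0" by (metis of_nat_Suc of_nat_neq_0)
  have "yser Y u one (int (Suc n)) = (1 / of_nat (Suc n) :: complex) *\<^sub>C (of_nat (Suc n) *\<^sub>C yser Y u one (int n + 1))"
    using nz by (simp add: scaleC_scaleC scaleC_one add.commute)
  also have "\<dots> = (1 / of_nat (Suc n) :: complex) *\<^sub>C yser Y (Dop Y one u) one (int n)"
    using yser_one_right_rec[OF Y] by simp
  also have "\<dots> = (1 / of_nat (fact (Suc n)) :: complex) *\<^sub>C (Dop Y one ^^ Suc n) u"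
    using Suc[of "Dop Y one u"] by (simp add: scaleC_scaleC funpow_Suc_right distrib_right del: funpow.simps)
  finally show ?case .
qed



section \<open>Binomial theorem for commuting operators\<close>

lemma pascal_sum:
  fixes T :: "nat \<Rightarrow> 'a::cvec"
  shows "(\<Sum>k\<le>Suc n. of_nat (Suc n choose k) *\<^sub>C T k) =
    (\<Sum>k\<le>n. of_nat (n choose k) *\<^sub>C T (Suc k)) + (\<Sum>k\<le>n. of_nat (n choose k) *\<^sub>C T k)"
proof -
  have "(\<Sum>k\<le>Suc n. of_nat (Suc n choose k) *\<^sub>C T k) =
      T 0 + (\<Sum>k\<le>n. of_nat (Suc n choose Suc k) *\<^sub>C T (Suc k))"
    by (subst sum.atMost_Suc_shift) (simp add: scaleC_one)
  also have "\<dots> = T 0 + ((\<Sum>k\<le>n. of_nat (n choose k) *\<^sub>C T (Suc k)) +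
      (\<Sum>k\<le>n. of_nat (n choose Suc k) *\<^sub>C T (Suc k)))"
    by (simp add: scaleC_add_left sum.distrib)
  also have "(\<Sum>k\<le>n. of_nat (n choose k) *\<^sub>C T k) =
      T 0 + (\<Sum>k\<le>n. of_nat (n choose Suc k) *\<^sub>C T (Suc k))"
  proof -
    have "(\<Sum>k\<le>Suc n. of_nat (n choose k) *\<^sub>C T k) =
        T 0 + (\<Sum>k\<le>n. of_nat (n choose Suc k) *\<^sub>C T (Suc k))"
      by (subst sum.atMost_Suc_shift) (simp add: scaleC_one)
    moreover have "(\<Sum>k\<le>Suc n. of_nat (n choose k) *\<^sub>C T k) = (\<Sum>k\<le>n. of_nat (n choose k) *\<^sub>C T k)"
      by (simp add: sum.atMost_Suc binomial_eq_0)
    ultimately show ?thesis by simp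
  qed
  ultimately show ?thesis by (simp add: add_ac)
qed

lemma funpow_commute2:
  fixes P Q :: "'a \<Rightarrow> 'a"
  assumes "\<And>x. P (Q x) = Q (P x)"
  shows "(P ^^ n) ((Q ^^ m) x) = (Q ^^ m) ((P ^^ n) x)"
proof (induction n arbitrary: x)
  case 0 then show ?case by simp
next
  case (Suc n)
  have "P ((Q ^^ m) y) = (Q ^^ m) (P y)" for y
    by (rule clinear_funpow_commute[where P=P and Q=Q, OF assms])
  then show ?case using Suc by (simp del: funpow.simps add: funpow_Suc_right)
qed

lemma op_binomial:
  fixes P Q :: "'a::cvec \<Rightarrow> 'a"
  assumes P: "clinear P" and Q: "clinear Q" and PQ: "\<And>x. P (Q x) = Q (P x)"
  shows "((\<lambda>x. P x + Q x) ^^ n) x = (\<Sum>k\<le>n. of_nat (n choose k) *\<^sub>C (P ^^ k) ((Q ^^ (n - k)) x))"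
proof (induction n)
  case 0 then show ?case by (simp add: scaleC_one)
next
  case (Suc n)
  have QP: "Q ((P ^^ k) y) = (P ^^ k) (Q y)" for k y
    using clinear_funpow_commute[where P=Q and Q=P, of k y] PQ by metis
  have "((\<lambda>x. P x + Q x) ^^ Suc n) x = P (((\<lambda>x. P x + Q x) ^^ n) x) + Q (((\<lambda>x. P x + Q x) ^^ n) x)"
    by simp
  also have "\<dots> = (\<Sum>k\<le>n. of_nat (n choose k) *\<^sub>C (P ^^ Suc k) ((Q ^^ (n - k)) x)) +
      (\<Sum>k\<le>n. of_nat (n choose k) *\<^sub>C (P ^^ k) ((Q ^^ Suc (n - k)) x))"
    unfolding Suc clinear_sum[OF P] clinear_sum[OF Q] clinear_scale[OF P] clinear_scale[OF Q] QP
    by simp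
  also have "\<dots> = (\<Sum>k\<le>Suc n. of_nat (Suc n choose k) *\<^sub>C (P ^^ k) ((Q ^^ (Suc n - k)) x))"
  proof -
    have a: "(\<Sum>k\<le>n. of_nat (n choose k) *\<^sub>C (P ^^ k) ((Q ^^ Suc (n - k)) x)) =
        (\<Sum>k\<le>n. of_nat (n choose k) *\<^sub>C (P ^^ k) ((Q ^^ (Suc n - k)) x))"
      by (intro sum.cong refl) (simp add: Suc_diff_le)
    show ?thesis unfolding a pascal_sum[of n "\<lambda>k. (P ^^ k) ((Q ^^ (Suc n - k)) x)"] by simp
  qed
  finally show ?case .
qed

lemma funpow_scale:
  fixes P :: "'a::cvec \<Rightarrow> 'a"
  assumes P: "clinear P"
  shows "((\<lambda>x. c *\<^sub>C P x) ^^ n) x = (c ^ n) *\<^sub>C (P ^^ n) x"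
proof (induction n)
  case 0 then show ?case by (simp add: scaleC_one)
next
  case (Suc n) then show ?case
    by (simp add: clinear_scale[OF P] scaleC_scaleC mult.commute)
qed


section \<open>The twisted tensor product\<close>

definition Cf :: "('u::cvec \<Rightarrow> 'u \<Rightarrow> int \<Rightarrow> 'u) \<Rightarrow> ('v::cvec \<Rightarrow> 'v \<Rightarrow> int \<Rightarrow> 'v) \<Rightarrow> laurent \<Rightarrow> 'u \<Rightarrow> 'u \<Rightarrow> 'v \<Rightarrow> 'v \<Rightarrow> int \<Rightarrow> ('u, 'v) tensor" where
  "Cf Yu Yv f u a b v' = conv (*\<^sub>C) (negser (lcoeff f)) (conv (\<otimes>) (yser Yu u a) (yser Yv b v'))"

definition Df :: "('u::cvec \<Rightarrow> 'u \<Rightarrow> int \<Rightarrow> 'u) \<Rightarrow> ('v::cvec \<Rightarrow> 'v \<Rightarrow> int \<Rightarrow> 'v) \<Rightarrow> 'u \<Rightarrow> 'v \<Rightarrow> ('u, 'v) tensor \<Rightarrow> laurent \<Rightarrow> int \<Rightarrow> ('u, 'v) tensor" where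
  "Df Yu Yv u v' t f = tlift (\<lambda>a b. Cf Yu Yv f u a b v') t"

lemma YR_simple_alt: "YR_simple Yu Yv R u v u' v' = tlift (Df Yu Yv u v') (R (v \<otimes> u'))"
  unfolding YR_simple_def Df_def Cf_def ..

lemma yser_YR: "yser (YR Yu Yv R) w w' = YRser Yu Yv R w w'"
  by (simp add: yser_def YR_def fun_eq_iff)

lemma lb_tensor_right: "lb s \<Longrightarrow> lb (\<lambda>m. a \<otimes> s m)"
  unfolding lb_def lbN_def by (metis tensor_zero_right)
lemma lb_tensor_left: "lb s \<Longrightarrow> lb (\<lambda>m. s m \<otimes> b)"
  unfolding lb_def lbN_def by (metis tensor_zero_left)

lemma conv2_lin_l:
  assumes X: "clinear X" "\<And>p. lb (X p)" and g: "lb g" and s: "lb s"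
  shows "clinear (\<lambda>p. conv (*\<^sub>C) g (conv (\<otimes>) (X p) s))"
proof (rule clinearI)
  fix x y
  show "conv (*\<^sub>C) g (conv (\<otimes>) (X (x + y)) s) =
      conv (*\<^sub>C) g (conv (\<otimes>) (X x) s) + conv (*\<^sub>C) g (conv (\<otimes>) (X y) s)"
    unfolding clinear_add[OF X(1)] conv_add_left[OF cbilinear_tensor X(2) X(2) s]
    by (rule conv_add_right[OF cbilinear_scaleC g]) (intro lb_conv X(2) s)+
next
  fix c x
  show "conv (*\<^sub>C) g (conv (\<otimes>) (X (c *\<^sub>C x)) s) = c *\<^sub>C conv (*\<^sub>C) g (conv (\<otimes>) (X x) s)"
    unfolding clinear_scale[OF X(1)] conv_scale_left[OF cbilinear_tensor X(2) s]
    by (rule conv_scale_right[OF cbilinear_scaleC g]) (intro lb_conv X(2) s)+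
qed

lemma conv2_lin_r:
  assumes X: "clinear X" "\<And>p. lb (X p)" and g: "lb g" and s: "lb s"
  shows "clinear (\<lambda>p. conv (*\<^sub>C) g (conv (\<otimes>) s (X p)))"
proof (rule clinearI)
  fix x y
  show "conv (*\<^sub>C) g (conv (\<otimes>) s (X (x + y))) =
      conv (*\<^sub>C) g (conv (\<otimes>) s (X x)) + conv (*\<^sub>C) g (conv (\<otimes>) s (X y))"
    unfolding clinear_add[OF X(1)] conv_add_right[OF cbilinear_tensor s X(2) X(2)]
    by (rule conv_add_right[OF cbilinear_scaleC g]) (intro lb_conv X(2) s)+
next
  fix c x
  show "conv (*\<^sub>C) g (conv (\<otimes>) s (X (c *\<^sub>C x))) = c *\<^sub>C conv (*\<^sub>C) g (conv (\<otimes>) s (X x))"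
    unfolding clinear_scale[OF X(1)] conv_scale_right[OF cbilinear_tensor s X(2)]
    by (rule conv_scale_right[OF cbilinear_scaleC g]) (intro lb_conv X(2) s)+
qed


lemma exp_lin_ext:
  fixes Lm Km :: "('a::cvec, 'b::cvec) tensor \<Rightarrow> int \<Rightarrow> 'c::cvec" and D :: "'c \<Rightarrow> 'c"
  assumes L: "clinear Lm" and K: "clinear Km" and D: "clinear D"
    and p1: "\<And>a b. lb (Km (a \<otimes> b))" and p2: "\<And>a b. Lm (a \<otimes> b) = exp_act D (Km (a \<otimes> b))"
  shows "lb (Km t) \<and> Lm t = exp_act D (Km t)"
proof (induction t rule: tensor_induct)
  case zero show ?case
    unfolding clinear_zero[OF L] clinear_zero[OF K] exp_act_zero using lb_zero by blast
next
  case (pure a b) then show ?case using p1 p2 by blast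
next
  case (add x y)
  then have h: "lb (Km x)" "lb (Km y)" "Lm x = exp_act D (Km x)" "Lm y = exp_act D (Km y)" by auto
  show ?case unfolding clinear_add[OF L] clinear_add[OF K] exp_act_add[OF D h(1,2)] h(3,4)
    using lb_add[OF h(1,2)] by blast
next
  case (scale c x)
  then have h: "lb (Km x)" "Lm x = exp_act D (Km x)" by auto
  show ?case unfolding clinear_scale[OF L] clinear_scale[OF K] exp_act_scale[OF D h(1)] h(2)
    using lb_scale[OF h(1)] by blast
qed

lemma conv_lin_map:
  assumes X: "clinear X" "\<And>p. lb (X p)" and g: "lb g"
  shows "clinear (\<lambda>p. conv (*\<^sub>C) g (X p))"
proof (rule clinearI)
  fix x y show "conv (*\<^sub>C) g (X (x + y)) = conv (*\<^sub>C) g (X x) + conv (*\<^sub>C) g (X y)"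
    unfolding clinear_add[OF X(1)] by (rule conv_add_right[OF cbilinear_scaleC g X(2) X(2)])
next
  fix c x show "conv (*\<^sub>C) g (X (c *\<^sub>C x)) = c *\<^sub>C conv (*\<^sub>C) g (X x)"
    unfolding clinear_scale[OF X(1)] by (rule conv_scale_right[OF cbilinear_scaleC g X(2)])
qed

lemma conv_lin_f:
  assumes S: "lb S"
  shows "clinear (\<lambda>f. conv (*\<^sub>C) (negser (lcoeff f)) S)"
proof (rule clinearI)
  fix f g show "conv (*\<^sub>C) (negser (lcoeff (f + g))) S = conv (*\<^sub>C) (negser (lcoeff f)) S + conv (*\<^sub>C) (negser (lcoeff g)) S"
    unfolding lcoeff_add negser_add
    by (rule conv_add_left[OF cbilinear_scaleC]) (intro lb_negser lb_lcoeff S)+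
next
  fix c f show "conv (*\<^sub>C) (negser (lcoeff (c *\<^sub>C f))) S = c *\<^sub>C conv (*\<^sub>C) (negser (lcoeff f)) S"
    unfolding lcoeff_scale negser_scale
    by (rule conv_scale_left[OF cbilinear_scaleC]) (intro lb_negser lb_lcoeff S)+
qed

lemma tmap_pow:
  fixes f :: "'a::cvec \<Rightarrow> 'a" and g :: "'b::cvec \<Rightarrow> 'b"
  assumes "clinear f" "clinear g"
  shows "(tmap f g ^^ j) (a \<otimes> b) = (f ^^ j) a \<otimes> (g ^^ j) b"
proof (induction j)
  case 0 then show ?case by simp
next
  case (Suc j) then show ?case using tmap_spec(2)[OF assms] by simp
qed

lemma id_pow: "((id :: 'a \<Rightarrow> 'a) ^^ j) x = x"
  by (induction j) auto

lemma negser_lin: "clinear negser"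
  by (rule clinearI) (simp_all add: negser_add negser_scale)

lemma negser_int: "negser s (int j) = ((-1) ^ j :: complex) *\<^sub>C s (int j)"
  by (simp add: negser_def scaleC_one scaleC_minus_left)

context
  fixes Yu :: "'u::cvec \<Rightarrow> 'u \<Rightarrow> int \<Rightarrow> 'u" and oneu :: 'u
    and Yv :: "'v::cvec \<Rightarrow> 'v \<Rightarrow> int \<Rightarrow> 'v" and onev :: 'v
    and R :: "('u, 'v) twop"
  assumes U: "nlva Yu oneu" and V: "nlva Yv onev"
    and T: "twisting_operator Yu oneu Yv onev R"
begin

lemma R_lin: "clinear R" using T by (simp add: twisting_operator_def)
lemma R_one_r: "R (v \<otimes> oneu) = (oneu \<otimes> v) \<otimes> lone" using T by (simp add: twisting_operator_def)
lemma R_one_l: "R (onev \<otimes> u) = (u \<otimes> onev) \<otimes> lone" using T by (simp add: twisting_operator_def)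

lemma lb_Cf: "lb (Cf Yu Yv f u a b v')"
  unfolding Cf_def
  by (intro lb_conv lb_negser lb_lcoeff lb_yser[OF U] lb_yser[OF V])

lemma lbs: "lb (yser Yu u a)" "lb (yser Yv b v')" "lb (negser (lcoeff f))"
  "lb (conv (\<otimes>) (yser Yu u a) (yser Yv b v'))"
  by (intro lb_conv lb_negser lb_lcoeff lb_yser[OF U] lb_yser[OF V])+

lemma Cf_lin_f: "clinear (\<lambda>f. Cf Yu Yv f u a b v')"
proof (rule clinearI)
  fix f g show "Cf Yu Yv (f + g) u a b v' = Cf Yu Yv f u a b v' + Cf Yu Yv g u a b v'"
    unfolding Cf_def lcoeff_add negser_add
    by (rule conv_add_left[OF cbilinear_scaleC]) (intro lbs)+
next
  fix c f show "Cf Yu Yv (c *\<^sub>C f) u a b v' = c *\<^sub>C Cf Yu Yv f u a b v'"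
    unfolding Cf_def lcoeff_scale negser_scale
    by (rule conv_scale_left[OF cbilinear_scaleC]) (intro lbs)+
qed

lemma Cf_lin_u: "clinear (\<lambda>u. Cf Yu Yv f u a b v')"
  unfolding Cf_def by (intro conv2_lin_l yser_lin_l[OF U] lbs)
lemma Cf_lin_a: "clinear (\<lambda>a. Cf Yu Yv f u a b v')"
  unfolding Cf_def by (intro conv2_lin_l yser_lin_r[OF U] lbs)
lemma Cf_lin_b: "clinear (\<lambda>b. Cf Yu Yv f u a b v')"
  unfolding Cf_def by (intro conv2_lin_r yser_lin_l[OF V] lbs)
lemma Cf_lin_v: "clinear (\<lambda>v'. Cf Yu Yv f u a b v')"
  unfolding Cf_def by (intro conv2_lin_r yser_lin_r[OF V] lbs)

lemma Cf_bil: "cbilinear (\<lambda>a b. Cf Yu Yv f u a b v')"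
  by (intro cbilinearI Cf_lin_a Cf_lin_b)

lemma Df_bil: "cbilinear (Df Yu Yv u v')"
  unfolding Df_def[abs_def]
  by (rule tlift_param_bil[where G="\<lambda>f a b. Cf Yu Yv f u a b v'", simplified])
    (intro Cf_bil Cf_lin_f)+

lemma Df_lin_u: "clinear (\<lambda>u. Df Yu Yv u v' t f)"
  unfolding Df_def
  by (rule tlift_param_linear[where G="\<lambda>u a b. Cf Yu Yv f u a b v'"]) (intro Cf_bil Cf_lin_u)+

lemma Df_lin_v: "clinear (\<lambda>v'. Df Yu Yv u v' t f)"
  unfolding Df_def
  by (rule tlift_param_linear[where G="\<lambda>v' a b. Cf Yu Yv f u a b v'"]) (intro Cf_bil Cf_lin_v)+

lemma Ys_lin_u: "clinear (\<lambda>u. YR_simple Yu Yv R u v u' v')"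
  unfolding YR_simple_alt
  by (rule tlift_param_linear[where G="\<lambda>u. Df Yu Yv u v'"]) (intro Df_bil Df_lin_u)+

lemma Ys_lin_v': "clinear (\<lambda>v'. YR_simple Yu Yv R u v u' v')"
  unfolding YR_simple_alt
  by (rule tlift_param_linear[where G="\<lambda>v'. Df Yu Yv u v'"]) (intro Df_bil Df_lin_v)+

lemma Ys_lin_v: "clinear (\<lambda>v. YR_simple Yu Yv R u v u' v')"
  unfolding YR_simple_alt
  by (intro clinear_comp[OF tlift_spec(1)[OF Df_bil]] clinear_comp[OF R_lin] cbil_l[OF cbilinear_tensor])

lemma Ys_lin_u': "clinear (\<lambda>u'. YR_simple Yu Yv R u v u' v')"
  unfolding YR_simple_alt
  by (intro clinear_comp[OF tlift_spec(1)[OF Df_bil]] clinear_comp[OF R_lin] cbil_r[OF cbilinear_tensor])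

lemma Ys_bil: "cbilinear (YR_simple Yu Yv R u v)"
  by (intro cbilinearI Ys_lin_u' Ys_lin_v')

lemma Fo_bil: "cbilinear (\<lambda>u v. tlift (YR_simple Yu Yv R u v))"
proof (rule cbilinearI)
  fix v show "clinear (\<lambda>u. tlift (YR_simple Yu Yv R u v))"
  proof (rule clinear_fun)
    fix t show "clinear (\<lambda>u. tlift (YR_simple Yu Yv R u v) t)"
      by (rule tlift_param_linear[where G="\<lambda>u. YR_simple Yu Yv R u v"]) (intro Ys_bil Ys_lin_u)+
  qed
next
  fix u show "clinear (\<lambda>v. tlift (YR_simple Yu Yv R u v))"
  proof (rule clinear_fun)
    fix t show "clinear (\<lambda>v. tlift (YR_simple Yu Yv R u v) t)"
      by (rule tlift_param_linear[where G="\<lambda>v. YR_simple Yu Yv R u v"]) (intro Ys_bil Ys_lin_v)+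
  qed
qed

lemma YRser_alt: "YRser Yu Yv R = tlift (\<lambda>u v. tlift (YR_simple Yu Yv R u v))"
  unfolding YRser_def ..

lemma YRser_pure: "YRser Yu Yv R (u \<otimes> v) (u' \<otimes> v') = YR_simple Yu Yv R u v u' v'"
  unfolding YRser_alt tlift_spec(2)[OF Fo_bil] tlift_spec(2)[OF Ys_bil] ..

lemma YRser_lin: "clinear (YRser Yu Yv R)"
  unfolding YRser_alt by (rule tlift_spec(1)[OF Fo_bil])


lemma Cf_lone: "Cf Yu Yv lone u a b v' = conv (\<otimes>) (yser Yu u a) (yser Yv b v')"
  unfolding Cf_def lcoeff_lone negser_delta conv_delta_left[OF cbilinear_scaleC] by (simp add: scaleC_one)

lemma Ys_one_right: "YR_simple Yu Yv R u v oneu v' = Cf Yu Yv lone u oneu v v'"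
  unfolding YR_simple_alt R_one_r tlift_spec(2)[OF Df_bil] Df_def tlift_spec(2)[OF Cf_bil] ..

lemma part2_eq: "yser (YR Yu Yv R) (u \<otimes> onev) (oneu \<otimes> v) = (\<lambda>m. yser Yu u oneu m \<otimes> v)"
  unfolding yser_YR YRser_pure Ys_one_right Cf_lone yser_one_left[OF V]
    conv_delta_right[OF cbilinear_tensor] ..

abbreviation "Du \<equiv> Dop Yu oneu"
abbreviation "Dv \<equiv> Dop Yv onev"
abbreviation "D1 \<equiv> tmap Du (id :: 'v \<Rightarrow> 'v)"
abbreviation "D2 \<equiv> tmap (id :: 'u \<Rightarrow> 'u) Dv"

lemma D1_lin: "clinear D1" by (rule tmap_spec(1)[OF Dop_lin[OF U] clinear_id])
lemma D2_lin: "clinear D2" by (rule tmap_spec(1)[OF clinear_id Dop_lin[OF V]])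
lemma D1_pure: "D1 (a \<otimes> b) = Du a \<otimes> b" using tmap_spec(2)[OF Dop_lin[OF U] clinear_id] by simp
lemma D2_pure: "D2 (a \<otimes> b) = a \<otimes> Dv b" using tmap_spec(2)[OF clinear_id Dop_lin[OF V]] by simp

lemma part1: "Dop (YR Yu Yv R) (oneu \<otimes> onev) t = D1 t + D2 t"
proof -
  have "Dop (YR Yu Yv R) (oneu \<otimes> onev) t = YRser Yu Yv R t (oneu \<otimes> onev) 1"
    by (simp add: Dop_def YR_def)
  also have "\<dots> = D1 t + D2 t"
  proof (rule tensor_lin_eq[where g="\<lambda>t. YRser Yu Yv R t (oneu \<otimes> onev) 1" and h="\<lambda>t. D1 t + D2 t"])
    show "clinear (\<lambda>t. YRser Yu Yv R t (oneu \<otimes> onev) 1)"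
      by (rule clinear_app[OF clinear_app[OF YRser_lin]])
    show "clinear (\<lambda>t. D1 t + D2 t)" by (rule clinear_plus[OF D1_lin D2_lin])
  next
    fix a b
    have "YRser Yu Yv R (a \<otimes> b) (oneu \<otimes> onev) 1 = conv (\<otimes>) (yser Yu a oneu) (yser Yv b onev) 1"
      unfolding YRser_pure Ys_one_right Cf_lone ..
    also have "\<dots> = (\<Sum>p\<in>{0..1}. yser Yu a oneu p \<otimes> yser Yv b onev (1 - p))"
      by (rule conv_eq[OF cbilinear_tensor lbN_yser_one_right[OF U] lbN_yser_one_right[OF V]]) auto
    also have "\<dots> = a \<otimes> Dv b + Du a \<otimes> b"
    proof -
      have "{0..1::int} = {0, 1}" by auto
      then show ?thesis
        using yser_one_right_0[OF U] yser_one_right_0[OF V] yser_one_right_1[OF U] yser_one_right_1[OF V]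
        by simp
    qed
    finally show "YRser Yu Yv R (a \<otimes> b) (oneu \<otimes> onev) 1 = D1 (a \<otimes> b) + D2 (a \<otimes> b)"
      by (simp add: D1_pure D2_pure add.commute)
  qed
  finally show ?thesis .
qed

lemma D12: "D1 (D2 x) = D2 (D1 x)"
  by (rule tensor_lin_eq[where g="\<lambda>x. D1 (D2 x)" and h="\<lambda>x. D2 (D1 x)"])
    (auto intro: clinear_comp D1_lin D2_lin simp: D1_pure D2_pure)

lemma D1_pow: "(D1 ^^ j) (a \<otimes> b) = (Du ^^ j) a \<otimes> b"
  using tmap_pow[OF Dop_lin[OF U] clinear_id, of j a b] by (simp only: id_pow)
lemma D2_pow: "(D2 ^^ j) (a \<otimes> b) = a \<otimes> (Dv ^^ j) b"
  using tmap_pow[OF clinear_id Dop_lin[OF V], of j a b] by (simp only: id_pow)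


lemma Dt_lin: "clinear (\<lambda>t. D1 t + D2 t)" by (rule clinear_plus[OF D1_lin D2_lin])

lemma core2: "exp_act (\<lambda>t. D1 t + D2 t) (negser (\<lambda>m. yser Yu a oneu m \<otimes> b)) = (\<lambda>m. a \<otimes> yser Yv b onev m)"
proof
  fix m
  define S where "S = negser (\<lambda>m. yser Yu a oneu m \<otimes> b)"
  define Dt where "Dt = (\<lambda>t. D1 t + D2 t)"
  define Q where "Q = (\<lambda>x. (-1::complex) *\<^sub>C D1 x)"
  define w where "w = a \<otimes> b"
  have Dt: "clinear Dt" unfolding Dt_def by (rule Dt_lin)
  have Q: "clinear Q" unfolding Q_def by (rule clinear_scale_map[OF D1_lin])
  have lbS: "lbN 0 S" unfolding S_def
    by (intro lbN_negser) (use lbN_yser_one_right[OF U] in \<open>auto simp: lbN_def\<close>)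
  have comm: "Dt (Q x) = Q (Dt x)" for x
    unfolding Dt_def Q_def
    by (simp add: clinear_scale[OF D1_lin] clinear_scale[OF D2_lin] clinear_add[OF D1_lin] D12 scaleC_add_right)
  have DQ: "(\<lambda>x. Dt x + Q x) = D2"
  proof
    fix x show "Dt x + Q x = D2 x"
      unfolding Dt_def Q_def scaleC_minus_left scaleC_one by simp
  qed
  show "exp_act Dt S m = a \<otimes> yser Yv b onev m"
  proof (cases "m < 0")
    case True
    have "exp_act Dt S m = 0" using lbN_exp_act[OF lbS, of Dt] True by (simp add: lbN_def)
    moreover have "yser Yv b onev m = 0" using lbN_yser_one_right[OF V] True by (simp add: lbN_def)
    ultimately show ?thesis by simp
  next
    case False
    then obtain n where m: "m = int n" by (metis nonneg_int_cases not_less)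
    have "exp_act Dt S (int n) = (\<Sum>k\<le>n. (1 / of_nat (fact k) :: complex) *\<^sub>C (Dt ^^ k) (S (int n - int k)))"
      by (rule exp_act_eq[OF Dt lbS]) simp
    also have "\<dots> = (\<Sum>k\<le>n. ((1 / fact n) * of_nat (n choose k) :: complex) *\<^sub>C (Dt ^^ k) ((Q ^^ (n - k)) w))"
    proof (intro sum.cong refl)
      fix k assume "k \<in> {..n}"
      then have kn: "k \<le> n" by simp
      have i: "int n - int k = int (n - k)" using kn by simp
      have "S (int n - int k) = ((-1) ^ (n - k) :: complex) *\<^sub>C (yser Yu a oneu (int (n - k)) \<otimes> b)"
        unfolding i S_def negser_int ..
      also have "\<dots> = (1 / of_nat (fact (n - k)) :: complex) *\<^sub>C (((-1) ^ (n - k) :: complex) *\<^sub>C (D1 ^^ (n - k)) w)"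
        unfolding yser_one_right[OF U] tensor_scale_left w_def D1_pow
        by (simp add: scaleC_scaleC mult.commute)
      also have "\<dots> = (1 / of_nat (fact (n - k)) :: complex) *\<^sub>C (Q ^^ (n - k)) w"
        unfolding Q_def funpow_scale[OF D1_lin] ..
      finally have eS: "S (int n - int k) = (1 / of_nat (fact (n - k)) :: complex) *\<^sub>C (Q ^^ (n - k)) w" .
      have coef: "(1 / of_nat (fact k) :: complex) * (1 / of_nat (fact (n - k))) = (1 / fact n) * of_nat (n choose k)"
        using binomial_fact[OF kn, where 'a=complex] by (simp add: field_simps)
      show "(1 / of_nat (fact k) :: complex) *\<^sub>C (Dt ^^ k) (S (int n - int k)) =
          ((1 / fact n) * of_nat (n choose k) :: complex) *\<^sub>C (Dt ^^ k) ((Q ^^ (n - k)) w)"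
        unfolding eS clinear_scale[OF clinear_funpow[OF Dt]] scaleC_scaleC coef ..
    qed
    also have "\<dots> = (1 / fact n :: complex) *\<^sub>C (\<Sum>k\<le>n. of_nat (n choose k) *\<^sub>C (Dt ^^ k) ((Q ^^ (n - k)) w))"
      by (simp add: scaleC_sum_right scaleC_scaleC)
    also have "\<dots> = (1 / fact n :: complex) *\<^sub>C (D2 ^^ n) w"
      unfolding op_binomial[OF Dt Q comm, symmetric] DQ ..
    also have "\<dots> = a \<otimes> yser Yv b onev (int n)"
      unfolding w_def D2_pow yser_one_right[OF V] tensor_scale_right by simp
    finally show ?thesis unfolding m S_def Dt_def .
  qed
qed

lemma Sx_lin_a: "clinear (\<lambda>a. negser (\<lambda>m. yser Yu a oneu m \<otimes> b))"
proof (rule clinear_comp[OF negser_lin], rule clinearI)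
  fix x y show "(\<lambda>m. yser Yu (x + y) oneu m \<otimes> b) = (\<lambda>m. yser Yu x oneu m \<otimes> b) + (\<lambda>m. yser Yu y oneu m \<otimes> b)"
    by (simp add: fun_eq_iff clinear_add[OF yser_lin_l[OF U]] tensor_add_left)
next
  fix c x show "(\<lambda>m. yser Yu (c *\<^sub>C x) oneu m \<otimes> b) = c *\<^sub>C (\<lambda>m. yser Yu x oneu m \<otimes> b)"
    by (simp add: fun_eq_iff clinear_scale[OF yser_lin_l[OF U]] tensor_scale_left)
qed

lemma Sx_lin_b: "clinear (\<lambda>b. negser (\<lambda>m. yser Yu a oneu m \<otimes> b))"
proof (rule clinear_comp[OF negser_lin], rule clinearI)
  fix x y show "(\<lambda>m. yser Yu a oneu m \<otimes> (x + y)) = (\<lambda>m. yser Yu a oneu m \<otimes> x) + (\<lambda>m. yser Yu a oneu m \<otimes> y)"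
    by (simp add: fun_eq_iff tensor_add_right)
next
  fix c x show "(\<lambda>m. yser Yu a oneu m \<otimes> (c *\<^sub>C x)) = c *\<^sub>C (\<lambda>m. yser Yu a oneu m \<otimes> x)"
    by (simp add: fun_eq_iff tensor_scale_right)
qed

lemma lb_Sx: "lb (negser (\<lambda>m. yser Yu a oneu m \<otimes> b))"
  by (intro lb_negser lb_tensor_left lb_yser[OF U])

lemma GR_bil: "cbilinear (\<lambda>a b. conv (*\<^sub>C) (negser (lcoeff f)) (negser (\<lambda>m. yser Yu a oneu m \<otimes> b)))"
  by (intro cbilinearI conv_lin_map Sx_lin_a Sx_lin_b lb_Sx lb_negser lb_lcoeff)

lemma GR_lin_f: "clinear (\<lambda>f. conv (*\<^sub>C) (negser (lcoeff f)) (negser (\<lambda>m. yser Yu a oneu m \<otimes> b)))"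
  by (rule conv_lin_f[OF lb_Sx])

lemma pure3: "Cf Yu Yv f oneu a b onev = exp_act (\<lambda>t. D1 t + D2 t) (conv (*\<^sub>C) (negser (lcoeff f)) (negser (\<lambda>m. yser Yu a oneu m \<otimes> b)))"
  unfolding exp_act_conv[OF Dt_lin lb_negser[OF lb_lcoeff] lb_Sx] core2 Cf_def yser_one_left[OF U]
    conv_delta_left[OF cbilinear_tensor] ..

lemma part3:
  "yser (YR Yu Yv R) (oneu \<otimes> v) (u \<otimes> onev)
    = exp_act (Dop (YR Yu Yv R) (oneu \<otimes> onev))
        (tlift (\<lambda>t f. tlift (\<lambda>a b.
           conv (*\<^sub>C) (negser (lcoeff f))
             (negser (yser (YR Yu Yv R) (a \<otimes> onev) (oneu \<otimes> b)))) t)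
          (R (v \<otimes> u)))"
proof -
  have DD: "Dop (YR Yu Yv R) (oneu \<otimes> onev) = (\<lambda>t. D1 t + D2 t)"
    using part1 by (simp add: fun_eq_iff)
  define GR where "GR f a b = conv (*\<^sub>C) (negser (lcoeff f)) (negser (\<lambda>m. yser Yu a oneu m \<otimes> b))" for f a and b :: 'v
  have Kbil: "cbilinear (\<lambda>t f. tlift (GR f) t)"
    unfolding GR_def by (rule tlift_param_bil) (intro GR_bil GR_lin_f)+
  have "lb (tlift (\<lambda>t f. tlift (GR f) t) r) \<and>
      tlift (Df Yu Yv oneu onev) r = exp_act (\<lambda>t. D1 t + D2 t) (tlift (\<lambda>t f. tlift (GR f) t) r)" for r
  proof (rule exp_lin_ext[OF tlift_spec(1)[OF Df_bil] tlift_spec(1)[OF Kbil] Dt_lin])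
    fix t f
    have inner: "lb (tlift (GR f) t) \<and> tlift (\<lambda>a b. Cf Yu Yv f oneu a b onev) t = exp_act (\<lambda>t. D1 t + D2 t) (tlift (GR f) t)"
    proof (rule exp_lin_ext[OF tlift_spec(1)[OF Cf_bil] tlift_spec(1) Dt_lin])
      show "cbilinear (GR f)" unfolding GR_def[abs_def] by (rule GR_bil)
      fix a b
      show "lb (tlift (GR f) (a \<otimes> b))"
        unfolding tlift_spec(2)[OF \<open>cbilinear (GR f)\<close>] GR_def by (intro lb_conv lb_negser lb_lcoeff lb_Sx)
      show "tlift (\<lambda>a b. Cf Yu Yv f oneu a b onev) (a \<otimes> b) = exp_act (\<lambda>t. D1 t + D2 t) (tlift (GR f) (a \<otimes> b))"
        unfolding tlift_spec(2)[OF \<open>cbilinear (GR f)\<close>] tlift_spec(2)[OF Cf_bil] GR_def by (rule pure3)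
    qed
    show "lb (tlift (\<lambda>t f. tlift (GR f) t) (t \<otimes> f))"
      unfolding tlift_spec(2)[OF Kbil] using inner by blast
    show "tlift (Df Yu Yv oneu onev) (t \<otimes> f) = exp_act (\<lambda>t. D1 t + D2 t) (tlift (\<lambda>t f. tlift (GR f) t) (t \<otimes> f))"
      unfolding tlift_spec(2)[OF Kbil] tlift_spec(2)[OF Df_bil] Df_def using inner by blast
  qed
  then have "tlift (Df Yu Yv oneu onev) (R (v \<otimes> u)) = exp_act (\<lambda>t. D1 t + D2 t) (tlift (\<lambda>t f. tlift (GR f) t) (R (v \<otimes> u)))"
    by blast
  then show ?thesis
    unfolding DD part2_eq unfolding yser_YR YRser_pure YR_simple_alt GR_def .
qed

lemma part2: "m < 0 \<Longrightarrow> yser (YR Yu Yv R) (u \<otimes> onev) (oneu \<otimes> v) m = 0"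
  unfolding part2_eq using lbN_yser_one_right[OF U] by (simp add: lbN_def)

end


theorem proposition2p5:
  fixes Yu :: "'u::cvec \<Rightarrow> 'u \<Rightarrow> int \<Rightarrow> 'u" and oneu :: 'u
    and Yv :: "'v::cvec \<Rightarrow> 'v \<Rightarrow> int \<Rightarrow> 'v" and onev :: 'v
    and R :: "('u, 'v) twop"
  assumes "nlva Yu oneu" and "nlva Yv onev"
    and "twisting_operator Yu oneu Yv onev R"
  shows "(\<forall>t. Dop (YR Yu Yv R) (oneu \<otimes> onev) t
              = tmap (Dop Yu oneu) id t + tmap id (Dop Yv onev) t)
    \<and> (\<forall>u v m. m < 0 \<longrightarrow> yser (YR Yu Yv R) (u \<otimes> onev) (oneu \<otimes> v) m = 0)
    \<and> (\<forall>u v. yser (YR Yu Yv R) (oneu \<otimes> v) (u \<otimes> onev)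
           = exp_act (Dop (YR Yu Yv R) (oneu \<otimes> onev))
               (tlift (\<lambda>t f. tlift (\<lambda>a b.
                  conv (*\<^sub>C) (negser (lcoeff f))
                    (negser (yser (YR Yu Yv R) (a \<otimes> onev) (oneu \<otimes> b)))) t)
                 (R (v \<otimes> u))))"
  using part1[OF assms] part2[OF assms] part3[OF assms] by blast

end
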